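(* Let $T=(\{T_g\}_{g\in G},\{\gamma_{g,h}\}_{g,h\in G},u)$ be an action of a group $G$ on a semigroupal category $\mathcal{C}$ and let $\mathcal{I}$ be an ideal of $\mathcal{C}$. Put $\mathcal{C}_g=\mathcal{I}\cap\overline{T_g(\mathcal{I})}$, let $S_g=T_g|_{\mathcal{C}_{g^{-1}}}\colon\mathcal{C}_{g^{-1}}\to\mathcal{C}_g$, and let $\gamma_{g,h}\colon S_gS_h\Rightarrow S_{gh}$ be the restriction of $\gamma_{g,h}$ (to $\mathcal{C}_{h^{-1}}\cap\mathcal{C}_{h^{-1}g^{-1}}$). Then these data (together with $u$ restricted to $\mathcal{I}$) define a partial action of $G$ on the semigroupal category $\mathcal{I}$.
   Context: A semigroupal category is a (strict) category with a tensor functor and associator satisfying the pentagon axiom. For a subcategory $\mathcal{D}$, $\overline{\mathcal{D}}$ is the smallest subcategory containing $\mathcal{D}$ closed under isomorphisms (containing, with any object $X$, every isomorphism $X\to X'$ of $\mathcal{C}$ and its target). An ideal is a subcategory closed under isomorphisms such that $X\otimes Y$, $Y\otimes X$ are objects of it whenever $X$ is and $Y$ is any object. An action of $G$ (unit $e$) on $\mathcal{C}$: semigroupal auto-equivalences $T_g$ of $\mathcal{C}$, natural isomorphisms of semigroupal functors $\gamma_{g,h}\colon T_gT_h\Rightarrow T_{gh}$, $u\colon\mathrm{Id}_{\mathcal{C}}\Rightarrow T_e$, with $(\gamma_{gh,k})_X\circ(\gamma_{g,h})_{T_k(X)}=(\gamma_{g,hk})_X\circ T_g((\gamma_{h,k})_X)$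 and with $u_{T_g(X)}$, $(\gamma_{e,g})_X$ mutually inverse and $T_g(u_X)$, $(\gamma_{g,e})_X$ mutually inverse. A partial action of $G$ on a semigroupal category $\mathcal{A}$ is a triple $(\{T_g\},\{\gamma_{g,h}\},u)$ with ideals $\mathcal{A}_g$ of $\mathcal{A}$ such that: (1) $(T_g,J^g)\colon\mathcal{A}_{g^{-1}}\to\mathcal{A}_g$ is a semigroupal equivalence; (2) $\mathcal{A}_e=\mathcal{A}$ and $u\colon\mathrm{Id}_{\mathcal{A}}\Rightarrow T_e$ is a natural isomorphism of semigroupal functors; (3) the restriction of $T_g$ to $\mathcal{A}_{g^{-1}}\cap\mathcal{A}_h$ is a semigroupal equivalence onto $\mathcal{A}_g\cap\mathcal{A}_{gh}$; (4) $\gamma_{g,h}\colon T_gT_h\Rightarrow T_{gh}$ is a natural isomorphism of functors $\mathcal{A}_{h^{-1}}\cap\mathcal{A}_{h^{-1}g^{-1}}\to\mathcal{A}_g\cap\mathcal{A}_{gh}$ compatible with the $J$'s, i.e. $J^{gh}_{X,Y}((\gamma_{g,h})_X\otimes(\gamma_{g,h})_Y)=(\gamma_{g,h})_{X\otimes Y}T_g(J^h_{X,Y})J^g_{T_hX,T_hY}$; such that $(\gamma_{gh,k})_X(\gamma_{g,h})_{T_k(X)}=(\gamma_{g,hk})_XT_g((\gamma_{h,k})_X)$ for $X\in\mathcal{A}_{k^{-1}}\cap\mathcal{A}_{k^{-1}h^{-1}}\cap\mathcal{A}_{k^{-1}h^{-1}g^{-1}}$, and for $X\in\mathcal{A}_{g^{-1}}$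 the morphisms $u_{T_g(X)}$, $(\gamma_{e,g})_X$ are mutually inverse, as are $T_g(u_X)$, $(\gamma_{g,e})_X$. *)

theory Defs
  imports "HOL-Algebra.Group"
begin

record ('o,'m) cat =
  Ob  :: "'o set"
  Ar  :: "'m set"
  Dom :: "'m \<Rightarrow> 'o"
  Cod :: "'m \<Rightarrow> 'o"
  Cmp :: "'m \<Rightarrow> 'm \<Rightarrow> 'm"   (* Cmp C g f = g \<circ> f *)
  Idt :: "'o \<Rightarrow> 'm"

definition category :: "('o,'m,'x) cat_scheme \<Rightarrow> bool" where
  "category C \<longleftrightarrow>
     (\<forall>f\<in>Ar C. Dom C f \<in> Ob C \<and> Cod C f \<in> Ob C) \<and>
     (\<forall>X\<in>Ob C. Idt C X \<in> Ar C \<and> Dom C (Idt C X) = X \<and> Cod C (Idt C X) = X) \<and>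
     (\<forall>f\<in>Ar C. \<forall>g\<in>Ar C. Cod C f = Dom C g \<longrightarrow>
        Cmp C g f \<in> Ar C \<and> Dom C (Cmp C g f) = Dom C f \<and> Cod C (Cmp C g f) = Cod C g) \<and>
     (\<forall>f\<in>Ar C. Cmp C (Idt C (Cod C f)) f = f \<and> Cmp C f (Idt C (Dom C f)) = f) \<and>
     (\<forall>f\<in>Ar C. \<forall>g\<in>Ar C. \<forall>h\<in>Ar C. Cod C f = Dom C g \<longrightarrow> Cod C g = Dom C h \<longrightarrow>
        Cmp C h (Cmp C g f) = Cmp C (Cmp C h g) f)"

definition chom :: "('o,'m,'x) cat_scheme \<Rightarrow> 'o \<Rightarrow> 'o \<Rightarrow> 'm set" where
  "chom C X Y = {f \<in> Ar C. Dom C f = X \<and> Cod C f = Y}"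

definition cat_iso :: "('o,'m,'x) cat_scheme \<Rightarrow> 'm \<Rightarrow> bool" where
  "cat_iso C f \<longleftrightarrow> f \<in> Ar C \<and>
     (\<exists>g\<in>chom C (Cod C f) (Dom C f).
        Cmp C g f = Idt C (Dom C f) \<and> Cmp C f g = Idt C (Cod C f))"

record ('o,'m) scat = "('o,'m) cat" +
  Tob :: "'o \<Rightarrow> 'o \<Rightarrow> 'o"
  Tar :: "'m \<Rightarrow> 'm \<Rightarrow> 'm"
  Asc :: "'o \<Rightarrow> 'o \<Rightarrow> 'o \<Rightarrow> 'm"    (* associator (X\<otimes>Y)\<otimes>Z \<rightarrow> X\<otimes>(Y\<otimes>Z) *)

definition semigroupal :: "('o,'m,'x) scat_scheme \<Rightarrow> bool" where
  "semigroupal C \<longleftrightarrow> category C \<and>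
     \<comment> \<open>tensor is a bifunctor\<close>
     (\<forall>X\<in>Ob C. \<forall>Y\<in>Ob C. Tob C X Y \<in> Ob C \<and> Tar C (Idt C X) (Idt C Y) = Idt C (Tob C X Y)) \<and>
     (\<forall>f\<in>Ar C. \<forall>g\<in>Ar C. Tar C f g \<in> chom C (Tob C (Dom C f) (Dom C g)) (Tob C (Cod C f) (Cod C g))) \<and>
     (\<forall>f\<in>Ar C. \<forall>f'\<in>Ar C. \<forall>g\<in>Ar C. \<forall>g'\<in>Ar C. Cod C f = Dom C g \<longrightarrow> Cod C f' = Dom C g' \<longrightarrow>
        Tar C (Cmp C g f) (Cmp C g' f') = Cmp C (Tar C g g') (Tar C f f')) \<and>
     \<comment> \<open>associator: natural isomorphism\<close>
     (\<forall>X\<in>Ob C. \<forall>Y\<in>Ob C. \<forall>Z\<in>Ob C.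
        Asc C X Y Z \<in> chom C (Tob C (Tob C X Y) Z) (Tob C X (Tob C Y Z)) \<and> cat_iso C (Asc C X Y Z)) \<and>
     (\<forall>f\<in>Ar C. \<forall>g\<in>Ar C. \<forall>h\<in>Ar C.
        Cmp C (Asc C (Cod C f) (Cod C g) (Cod C h)) (Tar C (Tar C f g) h) =
        Cmp C (Tar C f (Tar C g h)) (Asc C (Dom C f) (Dom C g) (Dom C h))) \<and>
     \<comment> \<open>pentagon\<close>
     (\<forall>W\<in>Ob C. \<forall>X\<in>Ob C. \<forall>Y\<in>Ob C. \<forall>Z\<in>Ob C.
        Cmp C (Tar C (Idt C W) (Asc C X Y Z))
          (Cmp C (Asc C W (Tob C X Y) Z) (Tar C (Asc C W X Y) (Idt C Z))) =
        Cmp C (Asc C W X (Tob C Y Z)) (Asc C (Tob C W X) Y Z))"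

definition subcat :: "('o,'m,'x) cat_scheme \<Rightarrow> 'o set \<times> 'm set \<Rightarrow> ('o,'m,'x) cat_scheme" where
  "subcat C D = C\<lparr>Ob := fst D, Ar := snd D\<rparr>"

definition is_subcategory :: "('o,'m,'x) cat_scheme \<Rightarrow> 'o set \<times> 'm set \<Rightarrow> bool" where
  "is_subcategory C D \<longleftrightarrow> fst D \<subseteq> Ob C \<and> snd D \<subseteq> Ar C \<and>
     (\<forall>f\<in>snd D. Dom C f \<in> fst D \<and> Cod C f \<in> fst D) \<and>
     (\<forall>X\<in>fst D. Idt C X \<in> snd D) \<and>
     (\<forall>f\<in>snd D. \<forall>g\<in>snd D. Cod C f = Dom C g \<longrightarrow> Cmp C g f \<in> snd D)"

definition iso_closed :: "('o,'m,'x) cat_scheme \<Rightarrow> 'o set \<times> 'm set \<Rightarrow> bool" where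
  "iso_closed C D \<longleftrightarrow>
     (\<forall>X\<in>fst D. \<forall>f. cat_iso C f \<and> Dom C f = X \<longrightarrow> f \<in> snd D \<and> Cod C f \<in> fst D)"

definition sc_inter :: "'o set \<times> 'm set \<Rightarrow> 'o set \<times> 'm set \<Rightarrow> 'o set \<times> 'm set" where
  "sc_inter D E = (fst D \<inter> fst E, snd D \<inter> snd E)"

definition iso_closure :: "('o,'m,'x) cat_scheme \<Rightarrow> 'o set \<times> 'm set \<Rightarrow> 'o set \<times> 'm set" where
  "iso_closure C D =
     (let \<E> = {E. is_subcategory C E \<and> iso_closed C E \<and> fst D \<subseteq> fst E \<and> snd D \<subseteq> snd E}
      in (\<Inter>(fst ` \<E>), \<Inter>(snd ` \<E>)))"

definition sc_ideal :: "('o,'m,'x) scat_scheme \<Rightarrow> 'o set \<times> 'm set \<Rightarrow> bool" where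
  "sc_ideal C D \<longleftrightarrow> is_subcategory C D \<and> iso_closed C D \<and>
     (\<forall>f\<in>Ar C. Dom C f \<in> fst D \<and> Cod C f \<in> fst D \<longrightarrow> f \<in> snd D) \<and>
     (\<forall>X\<in>fst D. \<forall>Y\<in>Ob C. Tob C X Y \<in> fst D \<and> Tob C Y X \<in> fst D)"

record ('o,'m) sfun =
  FO :: "'o \<Rightarrow> 'o"
  FA :: "'m \<Rightarrow> 'm"
  FJ :: "'o \<Rightarrow> 'o \<Rightarrow> 'm"   (* J_{X,Y} : F X \<otimes> F Y \<rightarrow> F (X \<otimes> Y) *)

definition sf_image :: "('o,'m) sfun \<Rightarrow> 'o set \<times> 'm set \<Rightarrow> 'o set \<times> 'm set" where
  "sf_image F D = (FO F ` fst D, FA F ` snd D)"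

definition is_functor :: "('o,'m,'x) cat_scheme \<Rightarrow> ('o,'m,'y) cat_scheme \<Rightarrow> ('o,'m) sfun \<Rightarrow> bool" where
  "is_functor C D F \<longleftrightarrow>
     (\<forall>X\<in>Ob C. FO F X \<in> Ob D \<and> FA F (Idt C X) = Idt D (FO F X)) \<and>
     (\<forall>f\<in>Ar C. FA F f \<in> chom D (FO F (Dom C f)) (FO F (Cod C f))) \<and>
     (\<forall>f\<in>Ar C. \<forall>g\<in>Ar C. Cod C f = Dom C g \<longrightarrow> FA F (Cmp C g f) = Cmp D (FA F g) (FA F f))"

definition sg_functor :: "('o,'m,'x) scat_scheme \<Rightarrow> ('o,'m,'y) scat_scheme \<Rightarrow> ('o,'m) sfun \<Rightarrow> bool" where
  "sg_functor C D F \<longleftrightarrow> is_functor C D F \<and>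
     (\<forall>X\<in>Ob C. \<forall>Y\<in>Ob C.
        FJ F X Y \<in> chom D (Tob D (FO F X) (FO F Y)) (FO F (Tob C X Y)) \<and> cat_iso D (FJ F X Y)) \<and>
     (\<forall>f\<in>Ar C. \<forall>g\<in>Ar C.
        Cmp D (FJ F (Cod C f) (Cod C g)) (Tar D (FA F f) (FA F g)) =
        Cmp D (FA F (Tar C f g)) (FJ F (Dom C f) (Dom C g))) \<and>
     (\<forall>X\<in>Ob C. \<forall>Y\<in>Ob C. \<forall>Z\<in>Ob C.
        Cmp D (FA F (Asc C X Y Z))
          (Cmp D (FJ F (Tob C X Y) Z) (Tar D (FJ F X Y) (Idt D (FO F Z)))) =
        Cmp D (FJ F X (Tob C Y Z))
          (Cmp D (Tar D (Idt D (FO F X)) (FJ F Y Z)) (Asc D (FO F X) (FO F Y) (FO F Z))))"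

definition sg_equiv :: "('o,'m,'x) scat_scheme \<Rightarrow> ('o,'m,'y) scat_scheme \<Rightarrow> ('o,'m) sfun \<Rightarrow> bool" where
  "sg_equiv C D F \<longleftrightarrow> sg_functor C D F \<and>
     (\<forall>X\<in>Ob C. \<forall>Y\<in>Ob C. \<forall>g\<in>chom D (FO F X) (FO F Y). \<exists>f\<in>chom C X Y. FA F f = g) \<and>
     (\<forall>X\<in>Ob C. \<forall>Y\<in>Ob C. \<forall>f\<in>chom C X Y. \<forall>f'\<in>chom C X Y. FA F f = FA F f' \<longrightarrow> f = f') \<and>
     (\<forall>Y\<in>Ob D. \<exists>X\<in>Ob C. \<exists>i\<in>chom D (FO F X) Y. cat_iso D i)"

definition id_sf :: "('o,'m,'x) scat_scheme \<Rightarrow> ('o,'m) sfun" where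
  "id_sf C = \<lparr>FO = (\<lambda>X. X), FA = (\<lambda>f. f), FJ = (\<lambda>X Y. Idt C (Tob C X Y))\<rparr>"

definition comp_sf :: "('o,'m,'x) scat_scheme \<Rightarrow> ('o,'m) sfun \<Rightarrow> ('o,'m) sfun \<Rightarrow> ('o,'m) sfun" where
  "comp_sf C F G = \<lparr>FO = FO F \<circ> FO G, FA = FA F \<circ> FA G,
     FJ = (\<lambda>X Y. Cmp C (FA F (FJ G X Y)) (FJ F (FO G X) (FO G Y)))\<rparr>"

definition nat_iso :: "('o,'m,'x) cat_scheme \<Rightarrow> ('o,'m,'y) cat_scheme \<Rightarrow> ('o,'m) sfun \<Rightarrow> ('o,'m) sfun \<Rightarrow> ('o \<Rightarrow> 'm) \<Rightarrow> bool" where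
  "nat_iso C D F F' \<eta> \<longleftrightarrow>
     (\<forall>X\<in>Ob C. \<eta> X \<in> chom D (FO F X) (FO F' X) \<and> cat_iso D (\<eta> X)) \<and>
     (\<forall>f\<in>Ar C. Cmp D (\<eta> (Cod C f)) (FA F f) = Cmp D (FA F' f) (\<eta> (Dom C f)))"

definition sg_nat_iso :: "('o,'m,'x) scat_scheme \<Rightarrow> ('o,'m,'y) scat_scheme \<Rightarrow> ('o,'m) sfun \<Rightarrow> ('o,'m) sfun \<Rightarrow> ('o \<Rightarrow> 'm) \<Rightarrow> bool" where
  "sg_nat_iso C D F F' \<eta> \<longleftrightarrow> nat_iso C D F F' \<eta> \<and>
     (\<forall>X\<in>Ob C. \<forall>Y\<in>Ob C.
        Cmp D (FJ F' X Y) (Tar D (\<eta> X) (\<eta> Y)) = Cmp D (\<eta> (Tob C X Y)) (FJ F X Y))"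

definition sg_action ::
  "('g,'b) monoid_scheme \<Rightarrow> ('o,'m,'x) scat_scheme \<Rightarrow> ('g \<Rightarrow> ('o,'m) sfun) \<Rightarrow>
   ('g \<Rightarrow> 'g \<Rightarrow> 'o \<Rightarrow> 'm) \<Rightarrow> ('o \<Rightarrow> 'm) \<Rightarrow> bool" where
  "sg_action G C T \<gamma> u \<longleftrightarrow>
     (\<forall>g\<in>carrier G. sg_equiv C C (T g)) \<and>
     (\<forall>g\<in>carrier G. \<forall>h\<in>carrier G.
        sg_nat_iso C C (comp_sf C (T g) (T h)) (T (g \<otimes>\<^bsub>G\<^esub> h)) (\<gamma> g h)) \<and>
     sg_nat_iso C C (id_sf C) (T \<one>\<^bsub>G\<^esub>) u \<and>
     (\<forall>g\<in>carrier G. \<forall>h\<in>carrier G. \<forall>k\<in>carrier G. \<forall>X\<in>Ob C.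
        Cmp C (\<gamma> (g \<otimes>\<^bsub>G\<^esub> h) k X) (\<gamma> g h (FO (T k) X)) =
        Cmp C (\<gamma> g (h \<otimes>\<^bsub>G\<^esub> k) X) (FA (T g) (\<gamma> h k X))) \<and>
     (\<forall>g\<in>carrier G. \<forall>X\<in>Ob C.
        Cmp C (u (FO (T g) X)) (\<gamma> \<one>\<^bsub>G\<^esub> g X) = Idt C (FO (T \<one>\<^bsub>G\<^esub>) (FO (T g) X)) \<and>
        Cmp C (\<gamma> \<one>\<^bsub>G\<^esub> g X) (u (FO (T g) X)) = Idt C (FO (T g) X) \<and>
        Cmp C (FA (T g) (u X)) (\<gamma> g \<one>\<^bsub>G\<^esub> X) = Idt C (FO (T g) (FO (T \<one>\<^bsub>G\<^esub>) X)) \<and>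
        Cmp C (\<gamma> g \<one>\<^bsub>G\<^esub> X) (FA (T g) (u X)) = Idt C (FO (T g) X))"

definition partial_action ::
  "('g,'b) monoid_scheme \<Rightarrow> ('o,'m,'x) scat_scheme \<Rightarrow> ('g \<Rightarrow> 'o set \<times> 'm set) \<Rightarrow>
   ('g \<Rightarrow> ('o,'m) sfun) \<Rightarrow> ('g \<Rightarrow> 'g \<Rightarrow> 'o \<Rightarrow> 'm) \<Rightarrow> ('o \<Rightarrow> 'm) \<Rightarrow> bool" where
  "partial_action G A Ag T \<gamma> u \<longleftrightarrow> semigroupal A \<and>
     (\<forall>g\<in>carrier G. sc_ideal A (Ag g)) \<and>
     \<comment> \<open>(1)\<close>
     (\<forall>g\<in>carrier G. sg_equiv (subcat A (Ag (inv\<^bsub>G\<^esub> g))) (subcat A (Ag g)) (T g)) \<and>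
     \<comment> \<open>(2)\<close>
     Ag \<one>\<^bsub>G\<^esub> = (Ob A, Ar A) \<and>
     sg_nat_iso A A (id_sf A) (T \<one>\<^bsub>G\<^esub>) u \<and>
     \<comment> \<open>(3)\<close>
     (\<forall>g\<in>carrier G. \<forall>h\<in>carrier G.
        sg_equiv (subcat A (sc_inter (Ag (inv\<^bsub>G\<^esub> g)) (Ag h)))
                 (subcat A (sc_inter (Ag g) (Ag (g \<otimes>\<^bsub>G\<^esub> h)))) (T g)) \<and>
     \<comment> \<open>(4)\<close>
     (\<forall>g\<in>carrier G. \<forall>h\<in>carrier G.
        sg_nat_iso (subcat A (sc_inter (Ag (inv\<^bsub>G\<^esub> h)) (Ag (inv\<^bsub>G\<^esub> h \<otimes>\<^bsub>G\<^esub> inv\<^bsub>G\<^esub> g))))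
                   (subcat A (sc_inter (Ag g) (Ag (g \<otimes>\<^bsub>G\<^esub> h))))
                   (comp_sf A (T g) (T h)) (T (g \<otimes>\<^bsub>G\<^esub> h)) (\<gamma> g h)) \<and>
     (\<forall>g\<in>carrier G. \<forall>h\<in>carrier G. \<forall>k\<in>carrier G.
        \<forall>X\<in>fst (Ag (inv\<^bsub>G\<^esub> k)) \<inter> fst (Ag (inv\<^bsub>G\<^esub> k \<otimes>\<^bsub>G\<^esub> inv\<^bsub>G\<^esub> h))
              \<inter> fst (Ag (inv\<^bsub>G\<^esub> k \<otimes>\<^bsub>G\<^esub> inv\<^bsub>G\<^esub> h \<otimes>\<^bsub>G\<^esub> inv\<^bsub>G\<^esub> g)).
        Cmp A (\<gamma> (g \<otimes>\<^bsub>G\<^esub> h) k X) (\<gamma> g h (FO (T k) X)) =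
        Cmp A (\<gamma> g (h \<otimes>\<^bsub>G\<^esub> k) X) (FA (T g) (\<gamma> h k X))) \<and>
     (\<forall>g\<in>carrier G. \<forall>X\<in>fst (Ag (inv\<^bsub>G\<^esub> g)).
        Cmp A (u (FO (T g) X)) (\<gamma> \<one>\<^bsub>G\<^esub> g X) = Idt A (FO (T \<one>\<^bsub>G\<^esub>) (FO (T g) X)) \<and>
        Cmp A (\<gamma> \<one>\<^bsub>G\<^esub> g X) (u (FO (T g) X)) = Idt A (FO (T g) X) \<and>
        Cmp A (FA (T g) (u X)) (\<gamma> g \<one>\<^bsub>G\<^esub> X) = Idt A (FO (T g) (FO (T \<one>\<^bsub>G\<^esub>) X)) \<and>
        Cmp A (\<gamma> g \<one>\<^bsub>G\<^esub> X) (FA (T g) (u X)) = Idt A (FO (T g) X))"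

end

theory Submission
  imports Defs
begin

definition isoR :: "('o,'m,'x) cat_scheme \<Rightarrow> 'o \<Rightarrow> 'o \<Rightarrow> bool" where
  "isoR C X Y \<longleftrightarrow> (\<exists>i. cat_iso C i \<and> Dom C i = X \<and> Cod C i = Y)"

definition fullsc :: "('o,'m,'x) cat_scheme \<Rightarrow> 'o set \<Rightarrow> 'o set \<times> 'm set" where
  "fullsc C S = (S, {f \<in> Ar C. Dom C f \<in> S \<and> Cod C f \<in> S})"

lemma subcat_simps[simp]:
  "Ob (subcat C D) = fst D" "Ar (subcat C D) = snd D" "Dom (subcat C D) = Dom C"
  "Cod (subcat C D) = Cod C" "Cmp (subcat C D) = Cmp C" "Idt (subcat C D) = Idt C"
  by (simp_all add: subcat_def)

lemma subcat_simps2[simp]: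
  fixes C :: "('o,'m,'x) scat_scheme"
  shows "Tob (subcat C D) = Tob C" "Tar (subcat C D) = Tar C" "Asc (subcat C D) = Asc C"
  by (simp_all add: subcat_def)

lemma subcat_subcat[simp]: "subcat (subcat C D) E = subcat C E"
  by (simp add: subcat_def)

lemma id_sf_subcat[simp]: "id_sf (subcat C D) = id_sf C"
  by (simp add: id_sf_def)

lemma comp_sf_subcat[simp]: "comp_sf (subcat C D) = comp_sf C"
  by (simp add: comp_sf_def fun_eq_iff)

lemma FO_comp[simp]: "FO (comp_sf C F G) = FO F \<circ> FO G" "FA (comp_sf C F G) = FA F \<circ> FA G"
  by (simp_all add: comp_sf_def)

lemma iso_ar: "cat_iso C f \<Longrightarrow> f \<in> Ar C"
  unfolding cat_iso_def by auto

context fixes C :: "('o,'m,'x) cat_scheme" assumes cat: "category C"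
begin

lemma dom_ob: "f \<in> Ar C \<Longrightarrow> Dom C f \<in> Ob C" and cod_ob: "f \<in> Ar C \<Longrightarrow> Cod C f \<in> Ob C"
  using cat unfolding category_def by auto

lemma idt: "X \<in> Ob C \<Longrightarrow> Idt C X \<in> Ar C \<and> Dom C (Idt C X) = X \<and> Cod C (Idt C X) = X"
  using cat unfolding category_def by auto

lemma cmp: "f \<in> Ar C \<Longrightarrow> g \<in> Ar C \<Longrightarrow> Cod C f = Dom C g \<Longrightarrow>
   Cmp C g f \<in> Ar C \<and> Dom C (Cmp C g f) = Dom C f \<and> Cod C (Cmp C g f) = Cod C g"
  using cat unfolding category_def by auto

lemma idl: "f \<in> Ar C \<Longrightarrow> Cmp C (Idt C (Cod C f)) f = f"
  and idr: "f \<in> Ar C \<Longrightarrow> Cmp C f (Idt C (Dom C f)) = f"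
  using cat unfolding category_def by auto

lemma assoc: "f \<in> Ar C \<Longrightarrow> g \<in> Ar C \<Longrightarrow> h \<in> Ar C \<Longrightarrow> Cod C f = Dom C g \<Longrightarrow> Cod C g = Dom C h \<Longrightarrow>
        Cmp C h (Cmp C g f) = Cmp C (Cmp C h g) f"
  using cat unfolding category_def by auto

lemma iso_inv: assumes "cat_iso C f"
  obtains g where "cat_iso C g" "g \<in> Ar C" "Dom C g = Cod C f" "Cod C g = Dom C f"
     "Cmp C g f = Idt C (Dom C f)" "Cmp C f g = Idt C (Cod C f)"
proof -
  from assms obtain g where g: "g \<in> chom C (Cod C f) (Dom C f)"
     "Cmp C g f = Idt C (Dom C f)" "Cmp C f g = Idt C (Cod C f)"
    unfolding cat_iso_def by blast
  have "cat_iso C g" using g assms unfolding cat_iso_def chom_def by auto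
  then show ?thesis using that g unfolding chom_def by auto
qed


lemma idt_iso: "X \<in> Ob C \<Longrightarrow> cat_iso C (Idt C X)"
  unfolding cat_iso_def chom_def using idt idl by fastforce

lemma iso_comp: assumes f: "cat_iso C f" and g: "cat_iso C g" and e: "Cod C f = Dom C g"
  shows "cat_iso C (Cmp C g f)"
proof -
  obtain f' where f': "cat_iso C f'" "f' \<in> Ar C" "Dom C f' = Cod C f" "Cod C f' = Dom C f"
     "Cmp C f' f = Idt C (Dom C f)" "Cmp C f f' = Idt C (Cod C f)" using iso_inv f by blast
  obtain g' where g': "cat_iso C g'" "g' \<in> Ar C" "Dom C g' = Cod C g" "Cod C g' = Dom C g"
     "Cmp C g' g = Idt C (Dom C g)" "Cmp C g g' = Idt C (Cod C g)" using iso_inv g by blast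
  have fa: "f \<in> Ar C" and ga: "g \<in> Ar C" using iso_ar[OF f] iso_ar[OF g] by auto
  have c1: "Cmp C (Cmp C f' g') (Cmp C g f) = Idt C (Dom C f)"
  proof -
    have gf: "Cmp C g f \<in> Ar C" "Dom C (Cmp C g f) = Dom C f" "Cod C (Cmp C g f) = Cod C g"
      using cmp[OF fa ga e] by auto
    have "Cmp C (Cmp C f' g') (Cmp C g f) = Cmp C f' (Cmp C g' (Cmp C g f))"
      using assoc[of "Cmp C g f" g' f'] gf f' g' e by simp
    also have "Cmp C g' (Cmp C g f) = Cmp C (Cmp C g' g) f" using assoc[of f g g'] fa ga g' e by simp
    also have "\<dots> = f" using g' e idl[OF fa] by simp
    finally show ?thesis using f' by simp
  qed
  have c2: "Cmp C (Cmp C g f) (Cmp C f' g') = Idt C (Cod C g)"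
  proof -
    have fg: "Cmp C f' g' \<in> Ar C" "Dom C (Cmp C f' g') = Cod C g" "Cod C (Cmp C f' g') = Dom C f"
      using cmp[of g' f'] f' g' e by auto
    have "Cmp C (Cmp C g f) (Cmp C f' g') = Cmp C g (Cmp C f (Cmp C f' g'))"
      using assoc[of "Cmp C f' g'" f g] fg fa ga e by simp
    also have "Cmp C f (Cmp C f' g') = Cmp C (Cmp C f f') g'" using assoc[of g' f' f] fa f' g' e by simp
    also have "\<dots> = g'" using f' e g' idl[OF g'(2)] by simp
    finally show ?thesis using g' by simp
  qed
  have "Cmp C f' g' \<in> chom C (Cod C (Cmp C g f)) (Dom C (Cmp C g f))"
    unfolding chom_def using cmp fa ga f' g' e by auto
  moreover have "Cmp C g f \<in> Ar C" using cmp fa ga e by auto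
  ultimately show ?thesis unfolding cat_iso_def
    using c1 c2 cmp fa ga e by auto
qed

lemma isoR_refl: "X \<in> Ob C \<Longrightarrow> isoR C X X"
  unfolding isoR_def using idt_iso idt by blast

lemma isoR_sym: assumes "isoR C X Y" shows "isoR C Y X"
proof -
  obtain i where i: "cat_iso C i" "Dom C i = X" "Cod C i = Y" using assms unfolding isoR_def by blast
  obtain g where "cat_iso C g" "Dom C g = Cod C i" "Cod C g = Dom C i" using iso_inv[OF i(1)] by blast
  then show ?thesis unfolding isoR_def using i by blast
qed

lemma isoR_trans: assumes "isoR C X Y" "isoR C Y Z" shows "isoR C X Z"
proof -
  obtain i where i: "cat_iso C i" "Dom C i = X" "Cod C i = Y" using assms unfolding isoR_def by blast
  obtain j where j: "cat_iso C j" "Dom C j = Y" "Cod C j = Z" using assms unfolding isoR_def by blast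
  have "cat_iso C (Cmp C j i)" using iso_comp i j by simp
  moreover have "Dom C (Cmp C j i) = X \<and> Cod C (Cmp C j i) = Z" using cmp iso_ar[OF i(1)] iso_ar[OF j(1)] i j by simp
  ultimately show ?thesis unfolding isoR_def by blast
qed

lemma isoR_ob: assumes "isoR C X Y" shows "X \<in> Ob C \<and> Y \<in> Ob C"
proof -
  obtain i where i: "cat_iso C i" "Dom C i = X" "Cod C i = Y" using assms unfolding isoR_def by blast
  have "Dom C i \<in> Ob C" "Cod C i \<in> Ob C" using dom_ob[OF iso_ar[OF i(1)]] cod_ob[OF iso_ar[OF i(1)]] .
  then show ?thesis unfolding i(2,3) by (rule conjI)
qed

end

lemma functor_iso: assumes "category C" "is_functor C D F" "cat_iso C f"
  shows "cat_iso D (FA F f)"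
proof -
  obtain g where g: "cat_iso C g" "g \<in> Ar C" "Dom C g = Cod C f" "Cod C g = Dom C f"
     "Cmp C g f = Idt C (Dom C f)" "Cmp C f g = Idt C (Cod C f)" by (rule iso_inv[OF assms(1) assms(3)])
  have fa: "f \<in> Ar C" using iso_ar[OF assms(3)] .
  have F: "\<forall>X\<in>Ob C. FO F X \<in> Ob D \<and> FA F (Idt C X) = Idt D (FO F X)"
     "\<forall>f\<in>Ar C. FA F f \<in> chom D (FO F (Dom C f)) (FO F (Cod C f))"
     "\<forall>f\<in>Ar C. \<forall>g\<in>Ar C. Cod C f = Dom C g \<longrightarrow> FA F (Cmp C g f) = Cmp D (FA F g) (FA F f)"
    using assms(2) unfolding is_functor_def by auto
  have ff: "FA F f \<in> Ar D" "Dom D (FA F f) = FO F (Dom C f)" "Cod D (FA F f) = FO F (Cod C f)"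
    using F(2) fa unfolding chom_def by auto
  have gg: "FA F g \<in> Ar D" "Dom D (FA F g) = FO F (Cod C f)" "Cod D (FA F g) = FO F (Dom C f)"
    using F(2) g unfolding chom_def by auto
  have e1: "Cmp D (FA F g) (FA F f) = Idt D (FO F (Dom C f))"
  proof -
    have "FA F (Cmp C g f) = Cmp D (FA F g) (FA F f)" using F(3) fa g(2,3) by auto
    then show ?thesis using g(5) F(1) dom_ob[OF assms(1) fa] by simp
  qed
  have e2: "Cmp D (FA F f) (FA F g) = Idt D (FO F (Cod C f))"
  proof -
    have "FA F (Cmp C f g) = Cmp D (FA F f) (FA F g)" using F(3) fa g(2,3,4) by auto
    then show ?thesis using g(6) F(1) cod_ob[OF assms(1) fa] by simp
  qed
  show ?thesis unfolding cat_iso_def chom_def using ff gg e1 e2 by auto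
qed

lemma functor_isoR: assumes "category C" "is_functor C D F" "isoR C X Y" shows "isoR D (FO F X) (FO F Y)"
proof -
  obtain i where i: "cat_iso C i" "Dom C i = X" "Cod C i = Y" using assms unfolding isoR_def by blast
  have "FA F i \<in> chom D (FO F X) (FO F Y)" using assms(2) iso_ar[OF i(1)] i unfolding is_functor_def by auto
  then show ?thesis unfolding isoR_def chom_def using functor_iso[OF assms(1,2) i(1)] by auto
qed

lemma nat_iso_isoR: "nat_iso C D F F' \<eta> \<Longrightarrow> X \<in> Ob C \<Longrightarrow> isoR D (FO F X) (FO F' X)"
  unfolding nat_iso_def isoR_def chom_def by blast

lemma semi_cat: "semigroupal C \<Longrightarrow> category C"
  unfolding semigroupal_def by auto

lemma tar_iso: assumes sg: "semigroupal C" and f: "cat_iso C f" and g: "cat_iso C g"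
  shows "cat_iso C (Tar C f g)"
proof -
  have cat: "category C" using sg semi_cat by blast
  obtain f' where f': "cat_iso C f'" "f' \<in> Ar C" "Dom C f' = Cod C f" "Cod C f' = Dom C f"
     "Cmp C f' f = Idt C (Dom C f)" "Cmp C f f' = Idt C (Cod C f)" by (rule iso_inv[OF cat f])
  obtain g' where g': "cat_iso C g'" "g' \<in> Ar C" "Dom C g' = Cod C g" "Cod C g' = Dom C g"
     "Cmp C g' g = Idt C (Dom C g)" "Cmp C g g' = Idt C (Cod C g)" by (rule iso_inv[OF cat g])
  have fa: "f \<in> Ar C" and ga: "g \<in> Ar C" using iso_ar[OF f] iso_ar[OF g] by auto
  have S: "\<forall>X\<in>Ob C. \<forall>Y\<in>Ob C. Tob C X Y \<in> Ob C \<and> Tar C (Idt C X) (Idt C Y) = Idt C (Tob C X Y)"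
     "\<forall>f\<in>Ar C. \<forall>g\<in>Ar C. Tar C f g \<in> chom C (Tob C (Dom C f) (Dom C g)) (Tob C (Cod C f) (Cod C g))"
     "\<forall>f\<in>Ar C. \<forall>f'\<in>Ar C. \<forall>g\<in>Ar C. \<forall>g'\<in>Ar C. Cod C f = Dom C g \<longrightarrow> Cod C f' = Dom C g' \<longrightarrow>
        Tar C (Cmp C g f) (Cmp C g' f') = Cmp C (Tar C g g') (Tar C f f')"
    using sg unfolding semigroupal_def by auto
  have S3: "\<And>f f' g g'. f\<in>Ar C \<Longrightarrow> f'\<in>Ar C \<Longrightarrow> g\<in>Ar C \<Longrightarrow> g'\<in>Ar C \<Longrightarrow> Cod C f = Dom C g \<Longrightarrow> Cod C f' = Dom C g' \<Longrightarrow>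
        Tar C (Cmp C g f) (Cmp C g' f') = Cmp C (Tar C g g') (Tar C f f')"
    using sg unfolding semigroupal_def by blast
  have t1: "Tar C f g \<in> Ar C" "Dom C (Tar C f g) = Tob C (Dom C f) (Dom C g)" "Cod C (Tar C f g) = Tob C (Cod C f) (Cod C g)"
    using S(2) fa ga unfolding chom_def by auto
  have t2: "Tar C f' g' \<in> Ar C" "Dom C (Tar C f' g') = Tob C (Cod C f) (Cod C g)" "Cod C (Tar C f' g') = Tob C (Dom C f) (Dom C g)"
    using S(2) f'(2,3,4) g'(2,3,4) unfolding chom_def by auto
  have e1: "Cmp C (Tar C f' g') (Tar C f g) = Idt C (Tob C (Dom C f) (Dom C g))"
  proof -
    have "Tar C (Cmp C f' f) (Cmp C g' g) = Cmp C (Tar C f' g') (Tar C f g)"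
      using S3[of f g f' g'] fa ga f'(2,3) g'(2,3) by simp
    then show ?thesis using f'(5) g'(5) S(1) dom_ob[OF cat fa] dom_ob[OF cat ga] by simp
  qed
  have e2: "Cmp C (Tar C f g) (Tar C f' g') = Idt C (Tob C (Cod C f) (Cod C g))"
  proof -
    have "Tar C (Cmp C f f') (Cmp C g g') = Cmp C (Tar C f g) (Tar C f' g')"
      using S3[of f' g' f g] fa ga f'(2,4) g'(2,4) by simp
    then show ?thesis using f'(6) g'(6) S(1) cod_ob[OF cat fa] cod_ob[OF cat ga] by simp
  qed
  show ?thesis unfolding cat_iso_def chom_def using t1 t2 e1 e2
    by (intro conjI bexI[of _ "Tar C f' g'"]) auto
qed

lemma tar_isoR: assumes sg: "semigroupal C" and "isoR C X X'" "isoR C Y Y'"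
  shows "isoR C (Tob C X Y) (Tob C X' Y')"
proof -
  obtain i where i: "cat_iso C i" "Dom C i = X" "Cod C i = X'" using assms unfolding isoR_def by blast
  obtain j where j: "cat_iso C j" "Dom C j = Y" "Cod C j = Y'" using assms unfolding isoR_def by blast
  have "Tar C i j \<in> chom C (Tob C X Y) (Tob C X' Y')"
    using sg iso_ar[OF i(1)] iso_ar[OF j(1)] i j unfolding semigroupal_def by auto
  then show ?thesis unfolding isoR_def chom_def using tar_iso[OF sg i(1) j(1)] by auto
qed



lemma fullsc_simps[simp]: "fst (fullsc C S) = S"
  "(f \<in> snd (fullsc C S)) \<longleftrightarrow> f \<in> Ar C \<and> Dom C f \<in> S \<and> Cod C f \<in> S"
  by (auto simp: fullsc_def)

lemma sub_chom: "X \<in> S \<Longrightarrow> Y \<in> S \<Longrightarrow> chom (subcat C (fullsc C S)) X Y = chom C X Y"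
  by (auto simp: chom_def)

lemma sub_iso: assumes cat: "category C"
  shows "cat_iso (subcat C (fullsc C S)) f \<longleftrightarrow> cat_iso C f \<and> Dom C f \<in> S \<and> Cod C f \<in> S"
proof
  assume "cat_iso (subcat C (fullsc C S)) f"
  then show "cat_iso C f \<and> Dom C f \<in> S \<and> Cod C f \<in> S"
    unfolding cat_iso_def chom_def by auto
next
  assume a: "cat_iso C f \<and> Dom C f \<in> S \<and> Cod C f \<in> S"
  then obtain g where g: "cat_iso C g" "g \<in> Ar C" "Dom C g = Cod C f" "Cod C g = Dom C f"
     "Cmp C g f = Idt C (Dom C f)" "Cmp C f g = Idt C (Cod C f)" using iso_inv[OF cat, of f] a by blast
  show "cat_iso (subcat C (fullsc C S)) f"
    unfolding cat_iso_def chom_def using a g iso_ar[of C f]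
    by (intro conjI bexI[of _ g]) auto
qed

lemma sub_category: assumes cat: "category C" and S: "S \<subseteq> Ob C"
  shows "category (subcat C (fullsc C S))"
  unfolding category_def
  using S idt[OF cat] cmp[OF cat] idl[OF cat] idr[OF cat] assoc[OF cat] by auto

lemma sub_semigroupal: assumes sg: "semigroupal C" and S: "S \<subseteq> Ob C"
  and tc: "\<And>X Y. X \<in> S \<Longrightarrow> Y \<in> S \<Longrightarrow> Tob C X Y \<in> S"
  shows "semigroupal (subcat C (fullsc C S))"
proof -
  have cat: "category C" using sg semi_cat by blast
  have A1: "\<And>X Y. X\<in>Ob C \<Longrightarrow> Y\<in>Ob C \<Longrightarrow> Tar C (Idt C X) (Idt C Y) = Idt C (Tob C X Y)"
    using sg unfolding semigroupal_def by blast
  have A2: "\<And>f g. f\<in>Ar C \<Longrightarrow> g\<in>Ar C \<Longrightarrow> Tar C f g \<in> chom C (Tob C (Dom C f) (Dom C g)) (Tob C (Cod C f) (Cod C g))"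
    using sg unfolding semigroupal_def by blast
  have A3: "\<And>f f' g g'. f\<in>Ar C \<Longrightarrow> f'\<in>Ar C \<Longrightarrow> g\<in>Ar C \<Longrightarrow> g'\<in>Ar C \<Longrightarrow> Cod C f = Dom C g \<Longrightarrow> Cod C f' = Dom C g' \<Longrightarrow>
        Tar C (Cmp C g f) (Cmp C g' f') = Cmp C (Tar C g g') (Tar C f f')"
    using sg unfolding semigroupal_def by blast
  have A4: "\<And>X Y Z. X\<in>Ob C \<Longrightarrow> Y\<in>Ob C \<Longrightarrow> Z\<in>Ob C \<Longrightarrow>
        Asc C X Y Z \<in> chom C (Tob C (Tob C X Y) Z) (Tob C X (Tob C Y Z)) \<and> cat_iso C (Asc C X Y Z)"
    using sg unfolding semigroupal_def by blast
  have A5: "\<And>f g h. f\<in>Ar C \<Longrightarrow> g\<in>Ar C \<Longrightarrow> h\<in>Ar C \<Longrightarrow>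
        Cmp C (Asc C (Cod C f) (Cod C g) (Cod C h)) (Tar C (Tar C f g) h) =
        Cmp C (Tar C f (Tar C g h)) (Asc C (Dom C f) (Dom C g) (Dom C h))"
    using sg unfolding semigroupal_def by blast
  have A6: "\<And>W X Y Z. W\<in>Ob C \<Longrightarrow> X\<in>Ob C \<Longrightarrow> Y\<in>Ob C \<Longrightarrow> Z\<in>Ob C \<Longrightarrow>
        Cmp C (Tar C (Idt C W) (Asc C X Y Z))
          (Cmp C (Asc C W (Tob C X Y) Z) (Tar C (Asc C W X Y) (Idt C Z))) =
        Cmp C (Asc C W X (Tob C Y Z)) (Asc C (Tob C W X) Y Z)"
    using sg unfolding semigroupal_def by blast
  show ?thesis
    unfolding semigroupal_def
  proof (intro conjI ballI)
    show "category (subcat C (fullsc C S))" using sub_category[OF cat S] .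
  next
    fix X Y assume "X \<in> Ob (subcat C (fullsc C S))" "Y \<in> Ob (subcat C (fullsc C S))"
    then show "Tob (subcat C (fullsc C S)) X Y \<in> Ob (subcat C (fullsc C S))"
      "Tar (subcat C (fullsc C S)) (Idt (subcat C (fullsc C S)) X) (Idt (subcat C (fullsc C S)) Y) =
       Idt (subcat C (fullsc C S)) (Tob (subcat C (fullsc C S)) X Y)"
      using tc A1 S by (auto simp: subset_iff)
  next
    fix f g assume "f \<in> Ar (subcat C (fullsc C S))" "g \<in> Ar (subcat C (fullsc C S))"
    then show "Tar (subcat C (fullsc C S)) f g \<in> chom (subcat C (fullsc C S))
          (Tob (subcat C (fullsc C S)) (Dom (subcat C (fullsc C S)) f) (Dom (subcat C (fullsc C S)) g))
          (Tob (subcat C (fullsc C S)) (Cod (subcat C (fullsc C S)) f) (Cod (subcat C (fullsc C S)) g))"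
      using A2[of f g] tc by (auto simp: chom_def)
  next
    fix f f' g g' assume "f \<in> Ar (subcat C (fullsc C S))" "f' \<in> Ar (subcat C (fullsc C S))"
       "g \<in> Ar (subcat C (fullsc C S))" "g' \<in> Ar (subcat C (fullsc C S))"
    then show "Cod (subcat C (fullsc C S)) f = Dom (subcat C (fullsc C S)) g \<longrightarrow>
           Cod (subcat C (fullsc C S)) f' = Dom (subcat C (fullsc C S)) g' \<longrightarrow>
           Tar (subcat C (fullsc C S)) (Cmp (subcat C (fullsc C S)) g f) (Cmp (subcat C (fullsc C S)) g' f') =
           Cmp (subcat C (fullsc C S)) (Tar (subcat C (fullsc C S)) g g') (Tar (subcat C (fullsc C S)) f f')"
      using A3[of f f' g g'] by auto
  next
    fix X Y Z assume a: "X \<in> Ob (subcat C (fullsc C S))" "Y \<in> Ob (subcat C (fullsc C S))" "Z \<in> Ob (subcat C (fullsc C S))"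
    then show "Asc (subcat C (fullsc C S)) X Y Z \<in> chom (subcat C (fullsc C S))
         (Tob (subcat C (fullsc C S)) (Tob (subcat C (fullsc C S)) X Y) Z)
         (Tob (subcat C (fullsc C S)) X (Tob (subcat C (fullsc C S)) Y Z))"
      using A4[of X Y Z] S tc by (auto simp: chom_def subset_iff)
    show "cat_iso (subcat C (fullsc C S)) (Asc (subcat C (fullsc C S)) X Y Z)"
      using A4[of X Y Z] S tc a by (auto simp: chom_def sub_iso[OF cat] subset_iff)
  next
    fix f g h assume "f \<in> Ar (subcat C (fullsc C S))" "g \<in> Ar (subcat C (fullsc C S))" "h \<in> Ar (subcat C (fullsc C S))"
    then show "Cmp (subcat C (fullsc C S)) (Asc (subcat C (fullsc C S)) (Cod (subcat C (fullsc C S)) f) (Cod (subcat C (fullsc C S)) g) (Cod (subcat C (fullsc C S)) h))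
          (Tar (subcat C (fullsc C S)) (Tar (subcat C (fullsc C S)) f g) h) =
         Cmp (subcat C (fullsc C S)) (Tar (subcat C (fullsc C S)) f (Tar (subcat C (fullsc C S)) g h))
          (Asc (subcat C (fullsc C S)) (Dom (subcat C (fullsc C S)) f) (Dom (subcat C (fullsc C S)) g) (Dom (subcat C (fullsc C S)) h))"
      using A5[of f g h] by auto
  next
    fix W X Y Z assume "W \<in> Ob (subcat C (fullsc C S))" "X \<in> Ob (subcat C (fullsc C S))" "Y \<in> Ob (subcat C (fullsc C S))" "Z \<in> Ob (subcat C (fullsc C S))"
    then show "Cmp (subcat C (fullsc C S)) (Tar (subcat C (fullsc C S)) (Idt (subcat C (fullsc C S)) W) (Asc (subcat C (fullsc C S)) X Y Z))
          (Cmp (subcat C (fullsc C S)) (Asc (subcat C (fullsc C S)) W (Tob (subcat C (fullsc C S)) X Y) Z)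
            (Tar (subcat C (fullsc C S)) (Asc (subcat C (fullsc C S)) W X Y) (Idt (subcat C (fullsc C S)) Z))) =
         Cmp (subcat C (fullsc C S)) (Asc (subcat C (fullsc C S)) W X (Tob (subcat C (fullsc C S)) Y Z))
          (Asc (subcat C (fullsc C S)) (Tob (subcat C (fullsc C S)) W X) Y Z)"
      using A6[of W X Y Z] S by auto
  qed
qed

lemma sub_ideal: assumes cat: "category C" and S: "S \<subseteq> Ob C" and S': "S' \<subseteq> S"
  and ic: "\<And>X f. X \<in> S' \<Longrightarrow> cat_iso C f \<Longrightarrow> Dom C f = X \<Longrightarrow> Cod C f \<in> S'"
  and tc: "\<And>X Y. X \<in> S' \<Longrightarrow> Y \<in> S \<Longrightarrow> Tob C X Y \<in> S' \<and> Tob C Y X \<in> S'"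
  shows "sc_ideal (subcat C (fullsc C S)) (fullsc C S')"
  unfolding sc_ideal_def is_subcategory_def iso_closed_def
  using S S' ic tc idt[OF cat] cmp[OF cat] by (auto simp: sub_iso[OF cat] iso_ar)



lemma sub_equiv: assumes sg: "semigroupal C" and eq: "sg_equiv C C F"
  and S1: "S1 \<subseteq> Ob C" and S2: "S2 \<subseteq> Ob C"
  and tc1: "\<And>X Y. X \<in> S1 \<Longrightarrow> Y \<in> S1 \<Longrightarrow> Tob C X Y \<in> S1"
  and tc2: "\<And>X Y. X \<in> S2 \<Longrightarrow> Y \<in> S2 \<Longrightarrow> Tob C X Y \<in> S2"
  and mp: "\<And>X. X \<in> S1 \<Longrightarrow> FO F X \<in> S2"
  and es: "\<And>Y. Y \<in> S2 \<Longrightarrow> \<exists>X\<in>S1. isoR C (FO F X) Y"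
  shows "sg_equiv (subcat C (fullsc C S1)) (subcat C (fullsc C S2)) F"
proof -
  have cat: "category C" using sg semi_cat by blast
  have F1: "\<And>X. X\<in>Ob C \<Longrightarrow> FO F X \<in> Ob C \<and> FA F (Idt C X) = Idt C (FO F X)"
    using eq unfolding sg_equiv_def sg_functor_def is_functor_def by blast
  have F2: "\<And>f. f\<in>Ar C \<Longrightarrow> FA F f \<in> chom C (FO F (Dom C f)) (FO F (Cod C f))"
    using eq unfolding sg_equiv_def sg_functor_def is_functor_def by blast
  have F3: "\<And>f g. f\<in>Ar C \<Longrightarrow> g\<in>Ar C \<Longrightarrow> Cod C f = Dom C g \<Longrightarrow> FA F (Cmp C g f) = Cmp C (FA F g) (FA F f)"
    using eq unfolding sg_equiv_def sg_functor_def is_functor_def by blast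
  have J1: "\<And>X Y. X\<in>Ob C \<Longrightarrow> Y\<in>Ob C \<Longrightarrow>
        FJ F X Y \<in> chom C (Tob C (FO F X) (FO F Y)) (FO F (Tob C X Y)) \<and> cat_iso C (FJ F X Y)"
    using eq unfolding sg_equiv_def sg_functor_def by blast
  have J2: "\<And>f g. f\<in>Ar C \<Longrightarrow> g\<in>Ar C \<Longrightarrow>
        Cmp C (FJ F (Cod C f) (Cod C g)) (Tar C (FA F f) (FA F g)) =
        Cmp C (FA F (Tar C f g)) (FJ F (Dom C f) (Dom C g))"
    using eq unfolding sg_equiv_def sg_functor_def by blast
  have J3: "\<And>X Y Z. X\<in>Ob C \<Longrightarrow> Y\<in>Ob C \<Longrightarrow> Z\<in>Ob C \<Longrightarrow>
        Cmp C (FA F (Asc C X Y Z))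
          (Cmp C (FJ F (Tob C X Y) Z) (Tar C (FJ F X Y) (Idt C (FO F Z)))) =
        Cmp C (FJ F X (Tob C Y Z))
          (Cmp C (Tar C (Idt C (FO F X)) (FJ F Y Z)) (Asc C (FO F X) (FO F Y) (FO F Z)))"
    using eq unfolding sg_equiv_def sg_functor_def by blast
  have E1: "\<And>X Y g. X\<in>Ob C \<Longrightarrow> Y\<in>Ob C \<Longrightarrow> g\<in>chom C (FO F X) (FO F Y) \<Longrightarrow> \<exists>f\<in>chom C X Y. FA F f = g"
    using eq unfolding sg_equiv_def by blast
  have E2: "\<And>X Y f f'. X\<in>Ob C \<Longrightarrow> Y\<in>Ob C \<Longrightarrow> f\<in>chom C X Y \<Longrightarrow> f'\<in>chom C X Y \<Longrightarrow> FA F f = FA F f' \<Longrightarrow> f = f'"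
    using eq unfolding sg_equiv_def by blast
  let ?A = "subcat C (fullsc C S1)" and ?B = "subcat C (fullsc C S2)"
  have func: "is_functor ?A ?B F"
    unfolding is_functor_def
  proof (intro conjI ballI impI)
    fix X assume "X \<in> Ob ?A"
    then show "FO F X \<in> Ob ?B" "FA F (Idt ?A X) = Idt ?B (FO F X)" using mp F1 S1 by auto
  next
    fix f assume "f \<in> Ar ?A"
    then show "FA F f \<in> chom ?B (FO F (Dom ?A f)) (FO F (Cod ?A f))"
      using F2[of f] mp by (auto simp: chom_def)
  next
    fix f g assume "f \<in> Ar ?A" "g \<in> Ar ?A" "Cod ?A f = Dom ?A g"
    then show "FA F (Cmp ?A g f) = Cmp ?B (FA F g) (FA F f)" using F3 by auto
  qed
  have sgf: "sg_functor ?A ?B F"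
    unfolding sg_functor_def
  proof (intro conjI ballI func)
    fix X Y assume a: "X \<in> Ob ?A" "Y \<in> Ob ?A"
    then have "X \<in> Ob C" "Y \<in> Ob C" using S1 by auto
    then show "FJ F X Y \<in> chom ?B (Tob ?B (FO F X) (FO F Y)) (FO F (Tob ?A X Y))"
       "cat_iso ?B (FJ F X Y)"
      using J1[of X Y] a tc1 tc2 mp by (auto simp: chom_def sub_iso[OF cat])
  next
    fix f g assume "f \<in> Ar ?A" "g \<in> Ar ?A"
    then show "Cmp ?B (FJ F (Cod ?A f) (Cod ?A g)) (Tar ?B (FA F f) (FA F g)) =
        Cmp ?B (FA F (Tar ?A f g)) (FJ F (Dom ?A f) (Dom ?A g))" using J2 by auto
  next
    fix X Y Z assume "X \<in> Ob ?A" "Y \<in> Ob ?A" "Z \<in> Ob ?A"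
    then show "Cmp ?B (FA F (Asc ?A X Y Z))
          (Cmp ?B (FJ F (Tob ?A X Y) Z) (Tar ?B (FJ F X Y) (Idt ?B (FO F Z)))) =
        Cmp ?B (FJ F X (Tob ?A Y Z))
          (Cmp ?B (Tar ?B (Idt ?B (FO F X)) (FJ F Y Z)) (Asc ?B (FO F X) (FO F Y) (FO F Z)))"
      using J3 S1 by auto
  qed
  show ?thesis unfolding sg_equiv_def
  proof (intro conjI ballI sgf impI)
    fix X Y g assume a: "X \<in> Ob ?A" "Y \<in> Ob ?A" "g \<in> chom ?B (FO F X) (FO F Y)"
    then have "g \<in> chom C (FO F X) (FO F Y)" by (auto simp: chom_def)
    moreover have "X \<in> Ob C" "Y \<in> Ob C" using a S1 by auto
    ultimately obtain f where "f\<in>chom C X Y" "FA F f = g" using E1 by blast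
    then show "\<exists>f\<in>chom ?A X Y. FA F f = g" using a by (auto simp: chom_def)
  next
    fix X Y f f' assume "X \<in> Ob ?A" "Y \<in> Ob ?A" "f \<in> chom ?A X Y" "f' \<in> chom ?A X Y" "FA F f = FA F f'"
    then show "f = f'" using E2[of X Y f f'] S1 by (auto simp: chom_def)
  next
    fix Y assume "Y \<in> Ob ?B"
    then obtain X where X: "X \<in> S1" "isoR C (FO F X) Y" using es by auto
    then obtain i where i: "cat_iso C i" "Dom C i = FO F X" "Cod C i = Y" unfolding isoR_def by blast
    show "\<exists>X\<in>Ob ?A. \<exists>i\<in>chom ?B (FO F X) Y. cat_iso ?B i"
      using X i mp \<open>Y \<in> Ob ?B\<close> iso_ar[OF i(1)]
      by (intro bexI[of _ X] bexI[of _ i]) (auto simp: chom_def sub_iso[OF cat])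
  qed
qed

lemma sub_natiso: assumes cat: "category C" and n: "sg_nat_iso C C F F' \<eta>"
  and S1: "S1 \<subseteq> Ob C"
  and mp: "\<And>X. X \<in> S1 \<Longrightarrow> FO F X \<in> S2" and mp': "\<And>X. X \<in> S1 \<Longrightarrow> FO F' X \<in> S2"
  shows "sg_nat_iso (subcat C (fullsc C S1)) (subcat C (fullsc C S2)) F F' \<eta>"
proof -
  have N1: "\<And>X. X\<in>Ob C \<Longrightarrow> \<eta> X \<in> chom C (FO F X) (FO F' X) \<and> cat_iso C (\<eta> X)"
    using n unfolding sg_nat_iso_def nat_iso_def by blast
  have N2: "\<And>f. f\<in>Ar C \<Longrightarrow> Cmp C (\<eta> (Cod C f)) (FA F f) = Cmp C (FA F' f) (\<eta> (Dom C f))"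
    using n unfolding sg_nat_iso_def nat_iso_def by blast
  have N3: "\<And>X Y. X\<in>Ob C \<Longrightarrow> Y\<in>Ob C \<Longrightarrow>
        Cmp C (FJ F' X Y) (Tar C (\<eta> X) (\<eta> Y)) = Cmp C (\<eta> (Tob C X Y)) (FJ F X Y)"
    using n unfolding sg_nat_iso_def by blast
  show ?thesis unfolding sg_nat_iso_def nat_iso_def
    using N1 N2 N3 S1 mp mp' by (auto simp: chom_def sub_iso[OF cat] subset_iff)
qed



lemma sc_inter_fullsc[simp]: "sc_inter (fullsc C S1) (fullsc C S2) = fullsc C (S1 \<inter> S2)"
  by (auto simp: sc_inter_def fullsc_def)

locale PA =
  fixes G :: "('g,'b) monoid_scheme" and C :: "('o,'m) scat"
    and T :: "'g \<Rightarrow> ('o,'m) sfun" and \<gamma> :: "'g \<Rightarrow> 'g \<Rightarrow> 'o \<Rightarrow> 'm" and u :: "'o \<Rightarrow> 'm"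
    and I :: "'o set \<times> 'm set"
  assumes grp: "group G" and sg: "semigroupal C" and act: "sg_action G C T \<gamma> u" and ideal: "sc_ideal C I"
begin

abbreviation "S \<equiv> fst I"
definition "Oc' g = {Y \<in> Ob C. \<exists>Z\<in>S. isoR C (FO (T g) Z) Y}"
definition "Oc g = S \<inter> Oc' g"

lemma cat: "category C" using sg semi_cat by blast

lemma S_ob: "S \<subseteq> Ob C" using ideal unfolding sc_ideal_def is_subcategory_def by blast

lemma I_full: "I = fullsc C S"
proof -
  have "snd I = {f \<in> Ar C. Dom C f \<in> S \<and> Cod C f \<in> S}"
    using ideal unfolding sc_ideal_def is_subcategory_def by blast
  then show ?thesis unfolding fullsc_def by (metis prod.collapse)
qed

lemma S_iso: "X \<in> S \<Longrightarrow> isoR C X Y \<Longrightarrow> Y \<in> S"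
  using ideal unfolding sc_ideal_def iso_closed_def isoR_def by blast

lemma S_tc: "X \<in> S \<Longrightarrow> Y \<in> Ob C \<Longrightarrow> Tob C X Y \<in> S \<and> Tob C Y X \<in> S"
  using ideal unfolding sc_ideal_def by blast

lemma Teq: "g \<in> carrier G \<Longrightarrow> sg_equiv C C (T g)"
  using act unfolding sg_action_def by blast

lemma Tfun: "g \<in> carrier G \<Longrightarrow> is_functor C C (T g)"
  using Teq unfolding sg_equiv_def sg_functor_def by blast

lemma TO: "g \<in> carrier G \<Longrightarrow> X \<in> Ob C \<Longrightarrow> FO (T g) X \<in> Ob C"
  using Tfun unfolding is_functor_def by blast

lemma Tiso: "g \<in> carrier G \<Longrightarrow> isoR C X Y \<Longrightarrow> isoR C (FO (T g) X) (FO (T g) Y)"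
  using functor_isoR[OF cat Tfun] by blast

lemma Tcomp: "g \<in> carrier G \<Longrightarrow> h \<in> carrier G \<Longrightarrow> X \<in> Ob C \<Longrightarrow>
   isoR C (FO (T g) (FO (T h) X)) (FO (T (g \<otimes>\<^bsub>G\<^esub> h)) X)"
proof -
  assume a: "g \<in> carrier G" "h \<in> carrier G" "X \<in> Ob C"
  have "sg_nat_iso C C (comp_sf C (T g) (T h)) (T (g \<otimes>\<^bsub>G\<^esub> h)) (\<gamma> g h)"
    using act a unfolding sg_action_def by blast
  then show ?thesis using nat_iso_isoR[of C C "comp_sf C (T g) (T h)"] a
    unfolding sg_nat_iso_def by auto
qed

lemma Tone: "X \<in> Ob C \<Longrightarrow> isoR C X (FO (T \<one>\<^bsub>G\<^esub>) X)"
proof -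
  assume a: "X \<in> Ob C"
  have "sg_nat_iso C C (id_sf C) (T \<one>\<^bsub>G\<^esub>) u"
    using act unfolding sg_action_def by blast
  then show ?thesis using nat_iso_isoR[of C C "id_sf C"] a
    unfolding sg_nat_iso_def by (auto simp: id_sf_def)
qed

lemma Tinv1: "g \<in> carrier G \<Longrightarrow> X \<in> Ob C \<Longrightarrow> isoR C (FO (T (inv\<^bsub>G\<^esub> g)) (FO (T g) X)) X"
proof -
  assume a: "g \<in> carrier G" "X \<in> Ob C"
  have "isoR C (FO (T (inv\<^bsub>G\<^esub> g)) (FO (T g) X)) (FO (T (inv\<^bsub>G\<^esub> g \<otimes>\<^bsub>G\<^esub> g)) X)"
    using Tcomp a group.inv_closed[OF grp] by blast
  moreover have "inv\<^bsub>G\<^esub> g \<otimes>\<^bsub>G\<^esub> g = \<one>\<^bsub>G\<^esub>" using group.l_inv[OF grp a(1)] .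
  ultimately have "isoR C (FO (T (inv\<^bsub>G\<^esub> g)) (FO (T g) X)) (FO (T \<one>\<^bsub>G\<^esub>) X)" by simp
  then show ?thesis using isoR_trans[OF cat _ isoR_sym[OF cat Tone[OF a(2)]]] by blast
qed

lemma Tinv2: "g \<in> carrier G \<Longrightarrow> X \<in> Ob C \<Longrightarrow> isoR C (FO (T g) (FO (T (inv\<^bsub>G\<^esub> g)) X)) X"
proof -
  assume a: "g \<in> carrier G" "X \<in> Ob C"
  have "isoR C (FO (T g) (FO (T (inv\<^bsub>G\<^esub> g)) X)) (FO (T (g \<otimes>\<^bsub>G\<^esub> inv\<^bsub>G\<^esub> g)) X)"
    using Tcomp a group.inv_closed[OF grp] by blast
  moreover have "g \<otimes>\<^bsub>G\<^esub> inv\<^bsub>G\<^esub> g = \<one>\<^bsub>G\<^esub>" using group.r_inv[OF grp a(1)] .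
  ultimately have "isoR C (FO (T g) (FO (T (inv\<^bsub>G\<^esub> g)) X)) (FO (T \<one>\<^bsub>G\<^esub>) X)" by simp
  then show ?thesis using isoR_trans[OF cat _ isoR_sym[OF cat Tone[OF a(2)]]] by blast
qed

lemma Jiso: assumes g: "g \<in> carrier G" and X: "X \<in> Ob C" and Y: "Y \<in> Ob C"
  shows "isoR C (Tob C (FO (T g) X) (FO (T g) Y)) (FO (T g) (Tob C X Y))"
proof -
  have "\<forall>X\<in>Ob C. \<forall>Y\<in>Ob C.
        FJ (T g) X Y \<in> chom C (Tob C (FO (T g) X) (FO (T g) Y)) (FO (T g) (Tob C X Y)) \<and> cat_iso C (FJ (T g) X Y)"
    using Teq[OF g] unfolding sg_equiv_def sg_functor_def by (elim conjE)
  then have "FJ (T g) X Y \<in> chom C (Tob C (FO (T g) X) (FO (T g) Y)) (FO (T g) (Tob C X Y))"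
     "cat_iso C (FJ (T g) X Y)" using X Y by auto
  then show ?thesis unfolding isoR_def chom_def by blast
qed

lemma Oc'_ob: "Oc' g \<subseteq> Ob C" unfolding Oc'_def by blast
lemma Oc_S: "Oc g \<subseteq> S" unfolding Oc_def by blast
lemma Oc_ob: "Oc g \<subseteq> Ob C" using Oc_S S_ob by blast

lemma Oc'_iso: "Y \<in> Oc' g \<Longrightarrow> isoR C Y Y' \<Longrightarrow> Y' \<in> Oc' g"
  unfolding Oc'_def using isoR_trans[OF cat] isoR_ob[OF cat] by blast

lemma Oc_iso: "Y \<in> Oc g \<Longrightarrow> isoR C Y Y' \<Longrightarrow> Y' \<in> Oc g"
  unfolding Oc_def using Oc'_iso S_iso by blast

lemma Oc_tc: assumes g: "g \<in> carrier G" and X: "X \<in> Oc g" and Y: "Y \<in> S"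
  shows "Tob C X Y \<in> Oc g \<and> Tob C Y X \<in> Oc g"
proof -
  have XS: "X \<in> S" and YO: "Y \<in> Ob C" using X Y Oc_S S_ob by auto
  from X obtain Z where Z: "Z \<in> S" "isoR C (FO (T g) Z) X" unfolding Oc_def Oc'_def by blast
  have ZO: "Z \<in> Ob C" using Z S_ob by auto
  define Y' where "Y' = FO (T (inv\<^bsub>G\<^esub> g)) Y"
  have Y'O: "Y' \<in> Ob C" unfolding Y'_def using TO group.inv_closed[OF grp g] YO by blast
  have Y'i: "isoR C (FO (T g) Y') Y" unfolding Y'_def using Tinv2 g YO by blast
  have "isoR C (FO (T g) (Tob C Z Y')) (Tob C X Y)"
    using Jiso[OF g ZO Y'O] tar_isoR[OF sg Z(2) Y'i] isoR_sym[OF cat] isoR_trans[OF cat] by blast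
  moreover have "isoR C (FO (T g) (Tob C Y' Z)) (Tob C Y X)"
    using Jiso[OF g Y'O ZO] tar_isoR[OF sg Y'i Z(2)] isoR_sym[OF cat] isoR_trans[OF cat] by blast
  moreover have "Tob C Z Y' \<in> S" "Tob C Y' Z \<in> S" using S_tc Z(1) Y'O by auto
  moreover have "Tob C X Y \<in> S" "Tob C Y X \<in> S" using S_tc XS YO by auto
  ultimately show ?thesis unfolding Oc_def Oc'_def using isoR_ob[OF cat] by blast
qed

lemma Oc_tc2: "g \<in> carrier G \<Longrightarrow> X \<in> Oc g \<Longrightarrow> Y \<in> Oc g \<Longrightarrow> Tob C X Y \<in> Oc g"
  using Oc_tc Oc_S by blast

lemma Oc_map: assumes g: "g \<in> carrier G" and X: "X \<in> Oc (inv\<^bsub>G\<^esub> g)"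
  shows "FO (T g) X \<in> Oc g"
proof -
  from X obtain Z where Z: "Z \<in> S" "isoR C (FO (T (inv\<^bsub>G\<^esub> g)) Z) X" and XS: "X \<in> S"
    unfolding Oc_def Oc'_def by blast
  have ZO: "Z \<in> Ob C" and XO: "X \<in> Ob C" using Z XS S_ob by auto
  have "isoR C Z (FO (T g) X)"
    using Tiso[OF g Z(2)] Tinv2[OF g ZO] isoR_sym[OF cat] isoR_trans[OF cat] by blast
  then have "FO (T g) X \<in> S" using S_iso Z(1) by blast
  moreover have "FO (T g) X \<in> Oc' g" unfolding Oc'_def
    using XS TO[OF g XO] isoR_refl[OF cat] by blast
  ultimately show ?thesis unfolding Oc_def by blast
qed

lemma Oc_ess: assumes g: "g \<in> carrier G" and Z: "Z \<in> S" and i: "isoR C (FO (T g) Z) Y" and Y: "Y \<in> S"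
  shows "Z \<in> Oc (inv\<^bsub>G\<^esub> g)"
proof -
  have ZO: "Z \<in> Ob C" using Z S_ob by auto
  have "isoR C (FO (T (inv\<^bsub>G\<^esub> g)) Y) Z"
    using Tiso[OF group.inv_closed[OF grp g] i] Tinv1[OF g ZO] isoR_sym[OF cat] isoR_trans[OF cat] by blast
  then show ?thesis unfolding Oc_def Oc'_def using Z Y ZO by blast
qed

lemma Oc_one: "Oc \<one>\<^bsub>G\<^esub> = S"
  unfolding Oc_def Oc'_def using S_ob Tone isoR_sym[OF cat] by blast

lemma Oc_map2: assumes g: "g \<in> carrier G" and h: "h \<in> carrier G"
  and X: "X \<in> Oc (inv\<^bsub>G\<^esub> g) \<inter> Oc h"
  shows "FO (T g) X \<in> Oc g \<inter> Oc (g \<otimes>\<^bsub>G\<^esub> h)"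
proof -
  have a: "FO (T g) X \<in> Oc g" using Oc_map g X by blast
  from X obtain Z where Z: "Z \<in> S" "isoR C (FO (T h) Z) X"
    unfolding Oc_def Oc'_def by blast
  have ZO: "Z \<in> Ob C" using Z S_ob by auto
  have "isoR C (FO (T (g \<otimes>\<^bsub>G\<^esub> h)) Z) (FO (T g) X)"
    using Tiso[OF g Z(2)] Tcomp[OF g h ZO] isoR_sym[OF cat] isoR_trans[OF cat] by blast
  then have "FO (T g) X \<in> Oc' (g \<otimes>\<^bsub>G\<^esub> h)" unfolding Oc'_def using Z(1) isoR_ob[OF cat] by blast
  then show ?thesis using a Oc_S unfolding Oc_def by blast
qed

lemma Oc_ess2: assumes g: "g \<in> carrier G" and h: "h \<in> carrier G"
  and Y: "Y \<in> Oc g \<inter> Oc (g \<otimes>\<^bsub>G\<^esub> h)"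
  shows "\<exists>X\<in>Oc (inv\<^bsub>G\<^esub> g) \<inter> Oc h. isoR C (FO (T g) X) Y"
proof -
  from Y obtain Z where Z: "Z \<in> S" "isoR C (FO (T g) Z) Y" and YS: "Y \<in> S"
    unfolding Oc_def Oc'_def by blast
  from Y obtain W where W: "W \<in> S" "isoR C (FO (T (g \<otimes>\<^bsub>G\<^esub> h)) W) Y"
    unfolding Oc_def Oc'_def by blast
  have ZO: "Z \<in> Ob C" and WO: "W \<in> Ob C" using Z W S_ob by auto
  have ig: "inv\<^bsub>G\<^esub> g \<in> carrier G" using group.inv_closed[OF grp g] .
  have gh: "g \<otimes>\<^bsub>G\<^esub> h \<in> carrier G" using monoid.m_closed[OF group.is_monoid[OF grp] g h] .
  have e: "inv\<^bsub>G\<^esub> g \<otimes>\<^bsub>G\<^esub> (g \<otimes>\<^bsub>G\<^esub> h) = h"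
  proof -
    have "inv\<^bsub>G\<^esub> g \<otimes>\<^bsub>G\<^esub> (g \<otimes>\<^bsub>G\<^esub> h) = (inv\<^bsub>G\<^esub> g \<otimes>\<^bsub>G\<^esub> g) \<otimes>\<^bsub>G\<^esub> h"
      using monoid.m_assoc[OF group.is_monoid[OF grp] ig g h] by simp
    also have "\<dots> = h" using group.l_inv[OF grp g] monoid.l_one[OF group.is_monoid[OF grp] h] by simp
    finally show ?thesis .
  qed
  have c1: "isoR C (FO (T h) W) (FO (T (inv\<^bsub>G\<^esub> g)) (FO (T (g \<otimes>\<^bsub>G\<^esub> h)) W))"
    using isoR_sym[OF cat Tcomp[OF ig gh WO]] e by simp
  have c2: "isoR C (FO (T (inv\<^bsub>G\<^esub> g)) (FO (T (g \<otimes>\<^bsub>G\<^esub> h)) W)) (FO (T (inv\<^bsub>G\<^esub> g)) Y)"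
    using Tiso[OF ig W(2)] .
  have c3: "isoR C (FO (T (inv\<^bsub>G\<^esub> g)) Y) Z"
    using isoR_trans[OF cat isoR_sym[OF cat Tiso[OF ig Z(2)]] Tinv1[OF g ZO]] .
  have "isoR C (FO (T h) W) Z" using c1 c2 c3 isoR_trans[OF cat] by blast
  then have "Z \<in> Oc h" unfolding Oc_def Oc'_def using Z(1) W(1) ZO by blast
  moreover have "Z \<in> Oc (inv\<^bsub>G\<^esub> g)" using Oc_ess[OF g Z(1) Z(2) YS] .
  ultimately show ?thesis using Z(2) by blast
qed


lemma act2: "g \<in> carrier G \<Longrightarrow> h \<in> carrier G \<Longrightarrow>
   sg_nat_iso C C (comp_sf C (T g) (T h)) (T (g \<otimes>\<^bsub>G\<^esub> h)) (\<gamma> g h)"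
  using act unfolding sg_action_def by blast

lemma act3: "sg_nat_iso C C (id_sf C) (T \<one>\<^bsub>G\<^esub>) u"
  using act unfolding sg_action_def by blast

lemma act4: "g \<in> carrier G \<Longrightarrow> h \<in> carrier G \<Longrightarrow> k \<in> carrier G \<Longrightarrow> X \<in> Ob C \<Longrightarrow>
        Cmp C (\<gamma> (g \<otimes>\<^bsub>G\<^esub> h) k X) (\<gamma> g h (FO (T k) X)) =
        Cmp C (\<gamma> g (h \<otimes>\<^bsub>G\<^esub> k) X) (FA (T g) (\<gamma> h k X))"
  using act unfolding sg_action_def by blast

lemma act5: "g \<in> carrier G \<Longrightarrow> X \<in> Ob C \<Longrightarrow>
        Cmp C (u (FO (T g) X)) (\<gamma> \<one>\<^bsub>G\<^esub> g X) = Idt C (FO (T \<one>\<^bsub>G\<^esub>) (FO (T g) X)) \<and>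
        Cmp C (\<gamma> \<one>\<^bsub>G\<^esub> g X) (u (FO (T g) X)) = Idt C (FO (T g) X) \<and>
        Cmp C (FA (T g) (u X)) (\<gamma> g \<one>\<^bsub>G\<^esub> X) = Idt C (FO (T g) (FO (T \<one>\<^bsub>G\<^esub>) X)) \<and>
        Cmp C (\<gamma> g \<one>\<^bsub>G\<^esub> X) (FA (T g) (u X)) = Idt C (FO (T g) X)"
  using act unfolding sg_action_def by blast

lemma Oc'_T: "g \<in> carrier G \<Longrightarrow> Z \<in> S \<Longrightarrow> FO (T g) Z \<in> Oc' g"
proof -
  assume g: "g \<in> carrier G" and Z: "Z \<in> S"
  have ZO: "Z \<in> Ob C" using Z S_ob by auto
  have "FO (T g) Z \<in> Ob C" using TO[OF g ZO] .
  then show ?thesis unfolding Oc'_def using Z isoR_refl[OF cat] by blast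
qed

lemma FA_T: "g \<in> carrier G \<Longrightarrow> f \<in> Ar C \<Longrightarrow>
  FA (T g) f \<in> Ar C \<and> Dom C (FA (T g) f) = FO (T g) (Dom C f) \<and> Cod C (FA (T g) f) = FO (T g) (Cod C f)"
proof -
  assume g: "g \<in> carrier G" and f: "f \<in> Ar C"
  have "\<forall>f\<in>Ar C. FA (T g) f \<in> chom C (FO (T g) (Dom C f)) (FO (T g) (Cod C f))"
    using Tfun[OF g] unfolding is_functor_def by (elim conjE)
  then show ?thesis using f unfolding chom_def by auto
qed

lemma Tfull: "g \<in> carrier G \<Longrightarrow> X \<in> Ob C \<Longrightarrow> Y \<in> Ob C \<Longrightarrow> k \<in> chom C (FO (T g) X) (FO (T g) Y) \<Longrightarrow>
   \<exists>f\<in>chom C X Y. FA (T g) f = k"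
proof -
  assume g: "g \<in> carrier G" and a: "X \<in> Ob C" "Y \<in> Ob C" "k \<in> chom C (FO (T g) X) (FO (T g) Y)"
  have "\<forall>X\<in>Ob C. \<forall>Y\<in>Ob C. \<forall>g'\<in>chom C (FO (T g) X) (FO (T g) Y). \<exists>f\<in>chom C X Y. FA (T g) f = g'"
    using Teq[OF g] unfolding sg_equiv_def by (elim conjE)
  then show ?thesis using a by blast
qed

lemma Ihas: "f \<in> snd I \<longleftrightarrow> f \<in> Ar C \<and> Dom C f \<in> S \<and> Cod C f \<in> S"
proof -
  have "snd I = {f \<in> Ar C. Dom C f \<in> S \<and> Cod C f \<in> S}"
    using ideal unfolding sc_ideal_def is_subcategory_def by blast
  then show ?thesis by blast
qed

lemma closure: assumes g: "g \<in> carrier G"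
  shows "iso_closure C (sf_image (T g) I) = fullsc C (Oc' g)"
proof -
  let ?D = "sf_image (T g) I"
  define E where "E = {E. is_subcategory C E \<and> iso_closed C E \<and> fst ?D \<subseteq> fst E \<and> snd ?D \<subseteq> snd E}"
  have sub: "is_subcategory C (fullsc C (Oc' g))"
  proof -
    have o: "\<And>X. X \<in> Oc' g \<Longrightarrow> X \<in> Ob C" using Oc'_ob by blast
    show ?thesis unfolding is_subcategory_def using o idt[OF cat] cmp[OF cat] by auto
  qed
  have icl: "iso_closed C (fullsc C (Oc' g))"
    unfolding iso_closed_def
  proof (intro ballI allI impI)
    fix X f assume X: "X \<in> fst (fullsc C (Oc' g))" and f: "cat_iso C f \<and> Dom C f = X"
    have "isoR C X (Cod C f)" unfolding isoR_def using f by blast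
    then have "Cod C f \<in> Oc' g" using Oc'_iso X by simp
    then show "f \<in> snd (fullsc C (Oc' g)) \<and> Cod C f \<in> fst (fullsc C (Oc' g))"
      using iso_ar[of C f] f X by simp
  qed
  have i1: "fst ?D \<subseteq> Oc' g" unfolding sf_image_def using Oc'_T[OF g] by auto
  have i2: "snd ?D \<subseteq> snd (fullsc C (Oc' g))"
  proof
    fix k assume "k \<in> snd ?D"
    then obtain f where f: "f \<in> snd I" "k = FA (T g) f" unfolding sf_image_def by auto
    then have "f \<in> Ar C" "Dom C f \<in> S" "Cod C f \<in> S" using Ihas by auto
    then show "k \<in> snd (fullsc C (Oc' g))" using FA_T[OF g] Oc'_T[OF g] f(2) by simp
  qed
  have mem: "fullsc C (Oc' g) \<in> E" unfolding E_def using sub icl i1 i2 by simp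
  have lowo: "Oc' g \<subseteq> fst E'" if E': "E' \<in> E" for E'
  proof
    fix Y assume "Y \<in> Oc' g"
    then obtain Z i where Z: "Z \<in> S" "cat_iso C i" "Dom C i = FO (T g) Z" "Cod C i = Y"
      unfolding Oc'_def isoR_def by blast
    have "FO (T g) Z \<in> fst E'" using E' Z(1) unfolding E_def sf_image_def by auto
    then show "Y \<in> fst E'" using E' Z unfolding E_def iso_closed_def by blast
  qed
  have lowa: "snd (fullsc C (Oc' g)) \<subseteq> snd E'" if E': "E' \<in> E" for E'
  proof
    fix h assume "h \<in> snd (fullsc C (Oc' g))"
    then have h: "h \<in> Ar C" "Dom C h \<in> Oc' g" "Cod C h \<in> Oc' g" by auto
    obtain Z1 i where Z1: "Z1 \<in> S" "cat_iso C i" "Dom C i = FO (T g) Z1" "Cod C i = Dom C h"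
      using h(2) unfolding Oc'_def isoR_def by blast
    obtain Z2 j where Z2: "Z2 \<in> S" "cat_iso C j" "Dom C j = FO (T g) Z2" "Cod C j = Cod C h"
      using h(3) unfolding Oc'_def isoR_def by blast
    obtain i' where i': "cat_iso C i'" "i' \<in> Ar C" "Dom C i' = Cod C i" "Cod C i' = Dom C i"
     "Cmp C i' i = Idt C (Dom C i)" "Cmp C i i' = Idt C (Cod C i)" by (rule iso_inv[OF cat Z1(2)])
    obtain j' where j': "cat_iso C j'" "j' \<in> Ar C" "Dom C j' = Cod C j" "Cod C j' = Dom C j"
     "Cmp C j' j = Idt C (Dom C j)" "Cmp C j j' = Idt C (Cod C j)" by (rule iso_inv[OF cat Z2(2)])
    have ia: "i \<in> Ar C" and ja: "j \<in> Ar C" using iso_ar[OF Z1(2)] iso_ar[OF Z2(2)] by auto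
    have subE: "is_subcategory C E'" and iclE: "iso_closed C E'" and imE: "snd ?D \<subseteq> snd E'"
      and imO: "fst ?D \<subseteq> fst E'"
      using E' unfolding E_def by auto
    have dh: "Dom C h \<in> fst E'" using lowo[OF E'] h(2) by blast
    have "FO (T g) Z2 \<in> fst ?D" unfolding sf_image_def using Z2(1) by simp
    then have TZ2: "FO (T g) Z2 \<in> fst E'" by (rule subsetD[OF imO])
    have iclR: "\<And>X f. X \<in> fst E' \<Longrightarrow> cat_iso C f \<Longrightarrow> Dom C f = X \<Longrightarrow> f \<in> snd E' \<and> Cod C f \<in> fst E'"
      using iclE unfolding iso_closed_def by blast
    have i'E: "i' \<in> snd E'" using iclR[OF dh i'(1)] i'(3) Z1(4) by simp
    have jE: "j \<in> snd E'" using iclR[OF TZ2 Z2(2) Z2(3)] by simp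
    define k where "k = Cmp C j' (Cmp C h i)"
    have hi: "Cmp C h i \<in> Ar C" "Dom C (Cmp C h i) = Dom C i" "Cod C (Cmp C h i) = Cod C h"
      using cmp[OF cat ia h(1)] Z1(4) by auto
    have ka: "k \<in> Ar C" "Dom C k = FO (T g) Z1" "Cod C k = FO (T g) Z2"
      unfolding k_def using cmp[OF cat hi(1) j'(2)] hi j' Z1 Z2 by auto
    have Z1O: "Z1 \<in> Ob C" and Z2O: "Z2 \<in> Ob C" using Z1(1) Z2(1) S_ob by auto
    obtain f where f: "f \<in> chom C Z1 Z2" "FA (T g) f = k"
      using Tfull[OF g Z1O Z2O] ka unfolding chom_def by blast
    have "f \<in> snd I" using f(1) Z1(1) Z2(1) Ihas unfolding chom_def by auto
    then have "k \<in> snd ?D" using f(2) unfolding sf_image_def by auto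
    then have kE: "k \<in> snd E'" using imE by blast
    have cmpE: "\<And>a b. a \<in> snd E' \<Longrightarrow> b \<in> snd E' \<Longrightarrow> Cod C a = Dom C b \<Longrightarrow> Cmp C b a \<in> snd E'"
      using subE unfolding is_subcategory_def by blast
    have e1: "Cmp C k i' = Cmp C j' h"
    proof -
      have "Cmp C k i' = Cmp C j' (Cmp C (Cmp C h i) i')"
        unfolding k_def using assoc[OF cat i'(2) hi(1) j'(2)] i' hi j' Z1 Z2 by simp
      also have "Cmp C (Cmp C h i) i' = Cmp C h (Cmp C i i')"
        using assoc[OF cat i'(2) ia h(1)] i' Z1 by simp
      also have "\<dots> = h" using i'(6) Z1(4) idr[OF cat h(1)] by simp
      finally show ?thesis .
    qed
    have e2: "Cmp C j (Cmp C k i') = h"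
    proof -
      have "Cmp C j (Cmp C j' h) = Cmp C (Cmp C j j') h"
        using assoc[OF cat h(1) j'(2) ja] j' Z2 by simp
      also have "\<dots> = h" using j'(6) Z2(4) idl[OF cat h(1)] by simp
      finally show ?thesis using e1 by simp
    qed
    have "Cmp C k i' \<in> snd E'" using cmpE[OF i'E kE] i'(4) Z1(3) ka(2) by simp
    moreover have "Cod C (Cmp C k i') = Dom C j"
      using cmp[OF cat i'(2) ka(1)] i'(4) Z1(3) ka(2,3) Z2(3) by simp
    ultimately have "Cmp C j (Cmp C k i') \<in> snd E'" using cmpE[OF _ jE] by blast
    then show "h \<in> snd E'" using e2 by simp
  qed
  have "iso_closure C ?D = (\<Inter>(fst ` E), \<Inter>(snd ` E))"
    unfolding iso_closure_def E_def Let_def by simp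
  moreover have "\<Inter>(fst ` E) = Oc' g"
  proof
    show "\<Inter>(fst ` E) \<subseteq> Oc' g" using mem by (metis INF_lower fullsc_simps(1))
    show "Oc' g \<subseteq> \<Inter>(fst ` E)" using lowo by blast
  qed
  moreover have "\<Inter>(snd ` E) = snd (fullsc C (Oc' g))"
  proof
    show "\<Inter>(snd ` E) \<subseteq> snd (fullsc C (Oc' g))" using mem by (rule INF_lower)
    show "snd (fullsc C (Oc' g)) \<subseteq> \<Inter>(snd ` E)" using lowa by blast
  qed
  ultimately show ?thesis by (metis fullsc_simps(1) prod.collapse)
qed


lemma tcS: "X \<in> S \<Longrightarrow> Y \<in> S \<Longrightarrow> Tob C X Y \<in> S"
proof -
  assume X: "X \<in> S" and Y: "Y \<in> S"
  then have "Y \<in> Ob C" using S_ob by auto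
  then show ?thesis using S_tc[OF X] by simp
qed

lemma Oc_ic: "X \<in> Oc g \<Longrightarrow> cat_iso C f \<Longrightarrow> Dom C f = X \<Longrightarrow> Cod C f \<in> Oc g"
proof -
  assume a: "X \<in> Oc g" "cat_iso C f" "Dom C f = X"
  then have "isoR C X (Cod C f)" unfolding isoR_def by blast
  then show ?thesis using Oc_iso[OF a(1)] by simp
qed

lemma Oc_ess1: "g \<in> carrier G \<Longrightarrow> Y \<in> Oc g \<Longrightarrow> \<exists>X\<in>Oc (inv\<^bsub>G\<^esub> g). isoR C (FO (T g) X) Y"
proof -
  assume g: "g \<in> carrier G" and Y: "Y \<in> Oc g"
  from Y obtain Z where Z: "Z \<in> S" "isoR C (FO (T g) Z) Y" and YS: "Y \<in> S"
    unfolding Oc_def Oc'_def by blast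
  have "Z \<in> Oc (inv\<^bsub>G\<^esub> g)" using Oc_ess[OF g Z(1) Z(2) YS] .
  then show ?thesis using Z(2) by blast
qed

lemma AgE: "g \<in> carrier G \<Longrightarrow> sc_inter I (iso_closure C (sf_image (T g) I)) = fullsc C (Oc g)"
proof -
  assume g: "g \<in> carrier G"
  have "sc_inter I (iso_closure C (sf_image (T g) I)) = sc_inter (fullsc C S) (fullsc C (Oc' g))"
    using closure[OF g] I_full by simp
  also have "\<dots> = fullsc C (Oc g)" unfolding Oc_def by simp
  finally show ?thesis .
qed

lemma Oc_inter_ob: "Oc a \<inter> Oc b \<subseteq> Ob C" using Oc_ob by blast

lemma Oc_inter_tc: "a \<in> carrier G \<Longrightarrow> b \<in> carrier G \<Longrightarrow> X \<in> Oc a \<inter> Oc b \<Longrightarrow> Y \<in> Oc a \<inter> Oc b \<Longrightarrow>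
   Tob C X Y \<in> Oc a \<inter> Oc b"
  using Oc_tc2 by blast

end

lemma PA_intro:
  assumes "semigroupal A"
  and "\<forall>g\<in>carrier G. sc_ideal A (Ag g)"
  and "\<forall>g\<in>carrier G. sg_equiv (subcat A (Ag (inv\<^bsub>G\<^esub> g))) (subcat A (Ag g)) (T g)"
  and "Ag \<one>\<^bsub>G\<^esub> = (Ob A, Ar A)"
  and "sg_nat_iso A A (id_sf A) (T \<one>\<^bsub>G\<^esub>) u"
  and "\<forall>g\<in>carrier G. \<forall>h\<in>carrier G.
        sg_equiv (subcat A (sc_inter (Ag (inv\<^bsub>G\<^esub> g)) (Ag h)))
                 (subcat A (sc_inter (Ag g) (Ag (g \<otimes>\<^bsub>G\<^esub> h)))) (T g)"
  and "\<forall>g\<in>carrier G. \<forall>h\<in>carrier G.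
        sg_nat_iso (subcat A (sc_inter (Ag (inv\<^bsub>G\<^esub> h)) (Ag (inv\<^bsub>G\<^esub> h \<otimes>\<^bsub>G\<^esub> inv\<^bsub>G\<^esub> g))))
                   (subcat A (sc_inter (Ag g) (Ag (g \<otimes>\<^bsub>G\<^esub> h))))
                   (comp_sf A (T g) (T h)) (T (g \<otimes>\<^bsub>G\<^esub> h)) (\<gamma> g h)"
  and "\<forall>g\<in>carrier G. \<forall>h\<in>carrier G. \<forall>k\<in>carrier G.
        \<forall>X\<in>fst (Ag (inv\<^bsub>G\<^esub> k)) \<inter> fst (Ag (inv\<^bsub>G\<^esub> k \<otimes>\<^bsub>G\<^esub> inv\<^bsub>G\<^esub> h))
              \<inter> fst (Ag (inv\<^bsub>G\<^esub> k \<otimes>\<^bsub>G\<^esub> inv\<^bsub>G\<^esub> h \<otimes>\<^bsub>G\<^esub> inv\<^bsub>G\<^esub> g)).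
        Cmp A (\<gamma> (g \<otimes>\<^bsub>G\<^esub> h) k X) (\<gamma> g h (FO (T k) X)) =
        Cmp A (\<gamma> g (h \<otimes>\<^bsub>G\<^esub> k) X) (FA (T g) (\<gamma> h k X))"
  and "\<forall>g\<in>carrier G. \<forall>X\<in>fst (Ag (inv\<^bsub>G\<^esub> g)).
        Cmp A (u (FO (T g) X)) (\<gamma> \<one>\<^bsub>G\<^esub> g X) = Idt A (FO (T \<one>\<^bsub>G\<^esub>) (FO (T g) X)) \<and>
        Cmp A (\<gamma> \<one>\<^bsub>G\<^esub> g X) (u (FO (T g) X)) = Idt A (FO (T g) X) \<and>
        Cmp A (FA (T g) (u X)) (\<gamma> g \<one>\<^bsub>G\<^esub> X) = Idt A (FO (T g) (FO (T \<one>\<^bsub>G\<^esub>) X)) \<and>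
        Cmp A (\<gamma> g \<one>\<^bsub>G\<^esub> X) (FA (T g) (u X)) = Idt A (FO (T g) X)"
  shows "partial_action G A Ag T \<gamma> u"
  unfolding partial_action_def by (intro conjI assms)

context PA
begin

lemma main: "partial_action G (subcat C I) (\<lambda>g. sc_inter I (iso_closure C (sf_image (T g) I))) T \<gamma> u"
proof -
  have A: "subcat C I = subcat C (fullsc C S)" using arg_cong[of I "fullsc C S" "subcat C", OF I_full] .
  have mon: "monoid G" using group.is_monoid[OF grp] .
  have ic: "\<And>g. g \<in> carrier G \<Longrightarrow> inv\<^bsub>G\<^esub> g \<in> carrier G" using group.inv_closed[OF grp] .
  have mc: "\<And>a b. a \<in> carrier G \<Longrightarrow> b \<in> carrier G \<Longrightarrow> a \<otimes>\<^bsub>G\<^esub> b \<in> carrier G"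
    using monoid.m_closed[OF mon] .
  show ?thesis unfolding A
  proof (rule PA_intro)
    show "semigroupal (subcat C (fullsc C S))"
      by (rule sub_semigroupal[OF sg S_ob tcS])
  next
    show "\<forall>g\<in>carrier G. sc_ideal (subcat C (fullsc C S)) (sc_inter I (iso_closure C (sf_image (T g) I)))"
    proof
      fix g assume g: "g \<in> carrier G"
      show "sc_ideal (subcat C (fullsc C S)) (sc_inter I (iso_closure C (sf_image (T g) I)))"
        unfolding AgE[OF g]
        by (rule sub_ideal[OF cat S_ob Oc_S Oc_ic Oc_tc[OF g]])
    qed
  next
    show "\<forall>g\<in>carrier G. sg_equiv (subcat (subcat C (fullsc C S)) (sc_inter I (iso_closure C (sf_image (T (inv\<^bsub>G\<^esub> g)) I))))
        (subcat (subcat C (fullsc C S)) (sc_inter I (iso_closure C (sf_image (T g) I)))) (T g)"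
    proof
      fix g assume g: "g \<in> carrier G"
      show "sg_equiv (subcat (subcat C (fullsc C S)) (sc_inter I (iso_closure C (sf_image (T (inv\<^bsub>G\<^esub> g)) I))))
        (subcat (subcat C (fullsc C S)) (sc_inter I (iso_closure C (sf_image (T g) I)))) (T g)"
        unfolding subcat_subcat AgE[OF g] AgE[OF ic[OF g]]
        by (rule sub_equiv[OF sg Teq[OF g] Oc_ob Oc_ob Oc_tc2[OF ic[OF g]] Oc_tc2[OF g] Oc_map[OF g] Oc_ess1[OF g]])
    qed
  next
    show "sc_inter I (iso_closure C (sf_image (T \<one>\<^bsub>G\<^esub>) I)) =
      (Ob (subcat C (fullsc C S)), Ar (subcat C (fullsc C S)))"
      unfolding AgE[OF monoid.one_closed[OF mon]] Oc_one by (simp add: fullsc_def)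
  next
    show "sg_nat_iso (subcat C (fullsc C S)) (subcat C (fullsc C S)) (id_sf (subcat C (fullsc C S))) (T \<one>\<^bsub>G\<^esub>) u"
      unfolding id_sf_subcat
    proof (rule sub_natiso[OF cat act3 S_ob])
      fix X assume X: "X \<in> S"
      then show "FO (id_sf C) X \<in> S" by (simp add: id_sf_def)
      have "X \<in> Ob C" using X S_ob by auto
      then show "FO (T \<one>\<^bsub>G\<^esub>) X \<in> S" using S_iso[OF X Tone] by simp
    qed
  next
    show "\<forall>g\<in>carrier G. \<forall>h\<in>carrier G.
       sg_equiv (subcat (subcat C (fullsc C S)) (sc_inter (sc_inter I (iso_closure C (sf_image (T (inv\<^bsub>G\<^esub> g)) I))) (sc_inter I (iso_closure C (sf_image (T h) I)))))
        (subcat (subcat C (fullsc C S)) (sc_inter (sc_inter I (iso_closure C (sf_image (T g) I))) (sc_inter I (iso_closure C (sf_image (T (g \<otimes>\<^bsub>G\<^esub> h)) I))))) (T g)"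
    proof (intro ballI)
      fix g h assume g: "g \<in> carrier G" and h: "h \<in> carrier G"
      show "sg_equiv (subcat (subcat C (fullsc C S)) (sc_inter (sc_inter I (iso_closure C (sf_image (T (inv\<^bsub>G\<^esub> g)) I))) (sc_inter I (iso_closure C (sf_image (T h) I)))))
        (subcat (subcat C (fullsc C S)) (sc_inter (sc_inter I (iso_closure C (sf_image (T g) I))) (sc_inter I (iso_closure C (sf_image (T (g \<otimes>\<^bsub>G\<^esub> h)) I))))) (T g)"
        unfolding subcat_subcat AgE[OF g] AgE[OF h] AgE[OF ic[OF g]] AgE[OF mc[OF g h]] sc_inter_fullsc
        by (rule sub_equiv[OF sg Teq[OF g] Oc_inter_ob Oc_inter_ob Oc_inter_tc[OF ic[OF g] h]
              Oc_inter_tc[OF g mc[OF g h]] Oc_map2[OF g h] Oc_ess2[OF g h]])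
    qed
  next
    show "\<forall>g\<in>carrier G. \<forall>h\<in>carrier G.
       sg_nat_iso (subcat (subcat C (fullsc C S)) (sc_inter (sc_inter I (iso_closure C (sf_image (T (inv\<^bsub>G\<^esub> h)) I))) (sc_inter I (iso_closure C (sf_image (T (inv\<^bsub>G\<^esub> h \<otimes>\<^bsub>G\<^esub> inv\<^bsub>G\<^esub> g)) I)))))
        (subcat (subcat C (fullsc C S)) (sc_inter (sc_inter I (iso_closure C (sf_image (T g) I))) (sc_inter I (iso_closure C (sf_image (T (g \<otimes>\<^bsub>G\<^esub> h)) I)))))
        (comp_sf (subcat C (fullsc C S)) (T g) (T h)) (T (g \<otimes>\<^bsub>G\<^esub> h)) (\<gamma> g h)"
    proof (intro ballI)
      fix g h assume g: "g \<in> carrier G" and h: "h \<in> carrier G"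
      have ig: "inv\<^bsub>G\<^esub> g \<in> carrier G" and ih: "inv\<^bsub>G\<^esub> h \<in> carrier G" using ic g h by auto
      have gh: "g \<otimes>\<^bsub>G\<^esub> h \<in> carrier G" using mc g h by auto
      have ihg: "inv\<^bsub>G\<^esub> h \<otimes>\<^bsub>G\<^esub> inv\<^bsub>G\<^esub> g \<in> carrier G" using mc ih ig by auto
      have e1: "h \<otimes>\<^bsub>G\<^esub> (inv\<^bsub>G\<^esub> h \<otimes>\<^bsub>G\<^esub> inv\<^bsub>G\<^esub> g) = inv\<^bsub>G\<^esub> g"
      proof -
        have "h \<otimes>\<^bsub>G\<^esub> (inv\<^bsub>G\<^esub> h \<otimes>\<^bsub>G\<^esub> inv\<^bsub>G\<^esub> g) = (h \<otimes>\<^bsub>G\<^esub> inv\<^bsub>G\<^esub> h) \<otimes>\<^bsub>G\<^esub> inv\<^bsub>G\<^esub> g"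
          using monoid.m_assoc[OF mon h ih ig] by simp
        also have "\<dots> = inv\<^bsub>G\<^esub> g" using group.r_inv[OF grp h] monoid.l_one[OF mon ig] by simp
        finally show ?thesis .
      qed
      have e2: "inv\<^bsub>G\<^esub> h \<otimes>\<^bsub>G\<^esub> inv\<^bsub>G\<^esub> g = inv\<^bsub>G\<^esub> (g \<otimes>\<^bsub>G\<^esub> h)"
        using group.inv_mult_group[OF grp g h] by simp
      have e3: "(g \<otimes>\<^bsub>G\<^esub> h) \<otimes>\<^bsub>G\<^esub> inv\<^bsub>G\<^esub> h = g"
      proof -
        have "(g \<otimes>\<^bsub>G\<^esub> h) \<otimes>\<^bsub>G\<^esub> inv\<^bsub>G\<^esub> h = g \<otimes>\<^bsub>G\<^esub> (h \<otimes>\<^bsub>G\<^esub> inv\<^bsub>G\<^esub> h)"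
          using monoid.m_assoc[OF mon g h ih] by simp
        also have "\<dots> = g" using group.r_inv[OF grp h] monoid.r_one[OF mon g] by simp
        finally show ?thesis .
      qed
      show "sg_nat_iso (subcat (subcat C (fullsc C S)) (sc_inter (sc_inter I (iso_closure C (sf_image (T (inv\<^bsub>G\<^esub> h)) I))) (sc_inter I (iso_closure C (sf_image (T (inv\<^bsub>G\<^esub> h \<otimes>\<^bsub>G\<^esub> inv\<^bsub>G\<^esub> g)) I)))))
        (subcat (subcat C (fullsc C S)) (sc_inter (sc_inter I (iso_closure C (sf_image (T g) I))) (sc_inter I (iso_closure C (sf_image (T (g \<otimes>\<^bsub>G\<^esub> h)) I)))))
        (comp_sf (subcat C (fullsc C S)) (T g) (T h)) (T (g \<otimes>\<^bsub>G\<^esub> h)) (\<gamma> g h)"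
        unfolding subcat_subcat comp_sf_subcat AgE[OF g] AgE[OF ih] AgE[OF ihg] AgE[OF gh] sc_inter_fullsc
      proof (rule sub_natiso[OF cat act2[OF g h] Oc_inter_ob])
        fix X assume X: "X \<in> Oc (inv\<^bsub>G\<^esub> h) \<inter> Oc (inv\<^bsub>G\<^esub> h \<otimes>\<^bsub>G\<^esub> inv\<^bsub>G\<^esub> g)"
        have "FO (T h) X \<in> Oc h \<inter> Oc (h \<otimes>\<^bsub>G\<^esub> (inv\<^bsub>G\<^esub> h \<otimes>\<^bsub>G\<^esub> inv\<^bsub>G\<^esub> g))"
          using Oc_map2[OF h ihg] X by simp
        then have "FO (T h) X \<in> Oc (inv\<^bsub>G\<^esub> g) \<inter> Oc h" unfolding e1 by blast
        then have "FO (T g) (FO (T h) X) \<in> Oc g \<inter> Oc (g \<otimes>\<^bsub>G\<^esub> h)" using Oc_map2[OF g h] by simp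
        then show "FO (comp_sf C (T g) (T h)) X \<in> Oc g \<inter> Oc (g \<otimes>\<^bsub>G\<^esub> h)" by simp
        have "X \<in> Oc (inv\<^bsub>G\<^esub> (g \<otimes>\<^bsub>G\<^esub> h)) \<inter> Oc (inv\<^bsub>G\<^esub> h)" using X e2 by simp
        then have "FO (T (g \<otimes>\<^bsub>G\<^esub> h)) X \<in> Oc (g \<otimes>\<^bsub>G\<^esub> h) \<inter> Oc ((g \<otimes>\<^bsub>G\<^esub> h) \<otimes>\<^bsub>G\<^esub> inv\<^bsub>G\<^esub> h)"
          using Oc_map2[OF gh ih] by simp
        then show "FO (T (g \<otimes>\<^bsub>G\<^esub> h)) X \<in> Oc g \<inter> Oc (g \<otimes>\<^bsub>G\<^esub> h)" unfolding e3 by blast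
      qed
    qed
  next
    show "\<forall>g\<in>carrier G. \<forall>h\<in>carrier G. \<forall>k\<in>carrier G.
       \<forall>X\<in>fst (sc_inter I (iso_closure C (sf_image (T (inv\<^bsub>G\<^esub> k)) I))) \<inter> fst (sc_inter I (iso_closure C (sf_image (T (inv\<^bsub>G\<^esub> k \<otimes>\<^bsub>G\<^esub> inv\<^bsub>G\<^esub> h)) I)))
              \<inter> fst (sc_inter I (iso_closure C (sf_image (T (inv\<^bsub>G\<^esub> k \<otimes>\<^bsub>G\<^esub> inv\<^bsub>G\<^esub> h \<otimes>\<^bsub>G\<^esub> inv\<^bsub>G\<^esub> g)) I))).
        Cmp (subcat C (fullsc C S)) (\<gamma> (g \<otimes>\<^bsub>G\<^esub> h) k X) (\<gamma> g h (FO (T k) X)) =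
        Cmp (subcat C (fullsc C S)) (\<gamma> g (h \<otimes>\<^bsub>G\<^esub> k) X) (FA (T g) (\<gamma> h k X))"
    proof (intro ballI)
      fix g h k X assume g: "g \<in> carrier G" and h: "h \<in> carrier G" and k: "k \<in> carrier G"
        and X: "X \<in> fst (sc_inter I (iso_closure C (sf_image (T (inv\<^bsub>G\<^esub> k)) I))) \<inter> fst (sc_inter I (iso_closure C (sf_image (T (inv\<^bsub>G\<^esub> k \<otimes>\<^bsub>G\<^esub> inv\<^bsub>G\<^esub> h)) I)))
              \<inter> fst (sc_inter I (iso_closure C (sf_image (T (inv\<^bsub>G\<^esub> k \<otimes>\<^bsub>G\<^esub> inv\<^bsub>G\<^esub> h \<otimes>\<^bsub>G\<^esub> inv\<^bsub>G\<^esub> g)) I)))"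
      have "X \<in> Oc (inv\<^bsub>G\<^esub> k)" using X unfolding AgE[OF ic[OF k]] by simp
      then have "X \<in> Ob C" using Oc_ob by blast
      then show "Cmp (subcat C (fullsc C S)) (\<gamma> (g \<otimes>\<^bsub>G\<^esub> h) k X) (\<gamma> g h (FO (T k) X)) =
        Cmp (subcat C (fullsc C S)) (\<gamma> g (h \<otimes>\<^bsub>G\<^esub> k) X) (FA (T g) (\<gamma> h k X))"
        using act4[OF g h k] by simp
    qed
  next
    show "\<forall>g\<in>carrier G. \<forall>X\<in>fst (sc_inter I (iso_closure C (sf_image (T (inv\<^bsub>G\<^esub> g)) I))).
        Cmp (subcat C (fullsc C S)) (u (FO (T g) X)) (\<gamma> \<one>\<^bsub>G\<^esub> g X) = Idt (subcat C (fullsc C S)) (FO (T \<one>\<^bsub>G\<^esub>) (FO (T g) X)) \<and>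
        Cmp (subcat C (fullsc C S)) (\<gamma> \<one>\<^bsub>G\<^esub> g X) (u (FO (T g) X)) = Idt (subcat C (fullsc C S)) (FO (T g) X) \<and>
        Cmp (subcat C (fullsc C S)) (FA (T g) (u X)) (\<gamma> g \<one>\<^bsub>G\<^esub> X) = Idt (subcat C (fullsc C S)) (FO (T g) (FO (T \<one>\<^bsub>G\<^esub>) X)) \<and>
        Cmp (subcat C (fullsc C S)) (\<gamma> g \<one>\<^bsub>G\<^esub> X) (FA (T g) (u X)) = Idt (subcat C (fullsc C S)) (FO (T g) X)"
    proof (intro ballI)
      fix g X assume g: "g \<in> carrier G" and X: "X \<in> fst (sc_inter I (iso_closure C (sf_image (T (inv\<^bsub>G\<^esub> g)) I)))"
      have "X \<in> Oc (inv\<^bsub>G\<^esub> g)" using X unfolding AgE[OF ic[OF g]] by simp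
      then have "X \<in> Ob C" using Oc_ob by blast
      then show "Cmp (subcat C (fullsc C S)) (u (FO (T g) X)) (\<gamma> \<one>\<^bsub>G\<^esub> g X) = Idt (subcat C (fullsc C S)) (FO (T \<one>\<^bsub>G\<^esub>) (FO (T g) X)) \<and>
        Cmp (subcat C (fullsc C S)) (\<gamma> \<one>\<^bsub>G\<^esub> g X) (u (FO (T g) X)) = Idt (subcat C (fullsc C S)) (FO (T g) X) \<and>
        Cmp (subcat C (fullsc C S)) (FA (T g) (u X)) (\<gamma> g \<one>\<^bsub>G\<^esub> X) = Idt (subcat C (fullsc C S)) (FO (T g) (FO (T \<one>\<^bsub>G\<^esub>) X)) \<and>
        Cmp (subcat C (fullsc C S)) (\<gamma> g \<one>\<^bsub>G\<^esub> X) (FA (T g) (u X)) = Idt (subcat C (fullsc C S)) (FO (T g) X)"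
        using act5[OF g] by simp
    qed
  qed
qed

end

theorem theorem3p10:
  fixes G :: "('g,'b) monoid_scheme" and C :: "('o,'m) scat"
    and T :: "'g \<Rightarrow> ('o,'m) sfun" and \<gamma> :: "'g \<Rightarrow> 'g \<Rightarrow> 'o \<Rightarrow> 'm" and u :: "'o \<Rightarrow> 'm"
    and I :: "'o set \<times> 'm set"
  assumes "group G" and "semigroupal C" and "sg_action G C T \<gamma> u" and "sc_ideal C I"
  shows "partial_action G (subcat C I)
           (\<lambda>g. sc_inter I (iso_closure C (sf_image (T g) I))) T \<gamma> u"
proof -
  interpret PA G C T \<gamma> u I by (rule PA.intro[OF assms])
  show ?thesis by (rule main)
qed

end
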